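(* In the setting below, the group $G_M$ has the finite presentation with generators $g_0,g_1,\dots,g_{2n+1}$ and defining relations $g_ig_j=g_jg_i$ for $i,j\in\{1,\dots,2n+1\}$, and $g_0g_ig_0^{-1}=g_1^{m_{i1}}\cdots g_{2n+1}^{m_{i,2n+1}}$ for $i\in\{1,\dots,2n+1\}$.
   Context: Let $n\ge 1$ and let $M=(m_{ij})\in SL(2n+1,\mathbb Z)$. Assume that $M$ has exactly one real eigenvalue $\alpha$, that $\alpha>0$, $\alpha\neq 1$, that $\alpha$ is a simple eigenvalue, and that the remaining eigenvalues are $\beta_1,\dots,\beta_k,\bar\beta_1,\dots,\bar\beta_k$ with $\mathrm{Im}\,\beta_j>0$. Let $W\subset\mathbb C^{2n+1}$ be the direct sum of the generalized eigenspaces of $M$ for $\beta_1,\dots,\beta_k$ (so $\dim_{\mathbb C}W=n$). Fix a real eigenvector $a=(a^{(1)},\dots,a^{(2n+1)})^\top\in\mathbb R^{2n+1}$ of $M$ for $\alpha$ and a basis $b_1,\dots,b_n$ of $W$, $b_j=(b_j^{(1)},\dots,b_j^{(2n+1)})^\top$, and let $R=(r_{\ell j})\in M_n(\mathbb C)$ be given by $Mb_j=\sum_{\ell=1}^n r_{\ell j}b_\ell$. For $i=1,\dots,2n+1$ put $u_i=(a^{(i)},b_1^{(i)},\dots,b_n^{(i)})^\top\in\mathbb R\times\mathbb C^n$. Let $\mathbb H=\{w\in\mathbb C:\mathrm{Im}\,w>0\}$, and define holomorphic automorphisms of $\mathbb H\times\mathbb C^n$ by $g_0(w,z)=(\alpha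 w,R^\top z)$ and $g_i(w,z)=(w,z)+u_i$ for $1\le i\le 2n+1$. Let $G_M$ be the group generated by $g_0,\dots,g_{2n+1}$. *)

theory Defs
  imports Complex_Main "HOL-Combinatorics.Permutations" "HOL-Computational_Algebra.Polynomial"
    "HOL-Algebra.Bij" "HOL-Algebra.Generated_Groups"
begin

text \<open>Vectors in K^N are functions nat => K vanishing outside {1..N};
  N x N matrices are functions nat => nat => K (only entries with indices in {1..N} matter).\<close>

definition supp_vec :: "nat \<Rightarrow> (nat \<Rightarrow> 'a::zero) \<Rightarrow> bool" where
  "supp_vec N v \<longleftrightarrow> (\<forall>i. i \<notin> {1..N} \<longrightarrow> v i = 0)"

definition matvec :: "nat \<Rightarrow> (nat \<Rightarrow> nat \<Rightarrow> 'a::comm_ring_1) \<Rightarrow> (nat \<Rightarrow> 'a) \<Rightarrow> nat \<Rightarrow> 'a" where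
  "matvec N A v = (\<lambda>i. if i \<in> {1..N} then (\<Sum>j=1..N. A i j * v j) else 0)"

definition mdet :: "nat \<Rightarrow> (nat \<Rightarrow> nat \<Rightarrow> 'a::comm_ring_1) \<Rightarrow> 'a" where
  "mdet N A = (\<Sum>p | p permutes {1..N}. of_int (sign p) * (\<Prod>i=1..N. A i (p i)))"

definition cmat :: "(nat \<Rightarrow> nat \<Rightarrow> int) \<Rightarrow> nat \<Rightarrow> nat \<Rightarrow> complex" where
  "cmat M = (\<lambda>i j. of_int (M i j))"

definition char_poly_fn :: "nat \<Rightarrow> (nat \<Rightarrow> nat \<Rightarrow> complex) \<Rightarrow> complex poly" where
  "char_poly_fn N A = mdet N (\<lambda>i j. (if i = j then [:0, 1:] else 0) - [:A i j:])"

definition is_eigenvalue :: "nat \<Rightarrow> (nat \<Rightarrow> nat \<Rightarrow> complex) \<Rightarrow> complex \<Rightarrow> bool" where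
  "is_eigenvalue N A l \<longleftrightarrow> (\<exists>v. supp_vec N v \<and> v \<noteq> (\<lambda>_. 0) \<and> matvec N A v = (\<lambda>i. l * v i))"

definition gen_eigenspace :: "nat \<Rightarrow> (nat \<Rightarrow> nat \<Rightarrow> complex) \<Rightarrow> complex \<Rightarrow> (nat \<Rightarrow> complex) set" where
  "gen_eigenspace N A l =
     {v. supp_vec N v \<and> ((\<lambda>x. \<lambda>i. matvec N A x i - l * x i) ^^ N) v = (\<lambda>_. 0)}"

definition upper_gen_space :: "nat \<Rightarrow> (nat \<Rightarrow> nat \<Rightarrow> complex) \<Rightarrow> (nat \<Rightarrow> complex) set" where
  "upper_gen_space N A =
     {v. \<exists>f. (\<forall>l. is_eigenvalue N A l \<and> Im l > 0 \<longrightarrow> f l \<in> gen_eigenspace N A l)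
            \<and> v = (\<lambda>i. \<Sum>l\<in>{l. is_eigenvalue N A l \<and> Im l > 0}. f l i)}"

definition is_basis_of :: "nat \<Rightarrow> (nat \<Rightarrow> nat \<Rightarrow> complex) \<Rightarrow> (nat \<Rightarrow> complex) set \<Rightarrow> bool" where
  "is_basis_of n b W \<longleftrightarrow>
     (\<forall>j\<in>{1..n}. b j \<in> W)
   \<and> (\<forall>c. (\<lambda>i. \<Sum>j=1..n. c j * b j i) = (\<lambda>_. 0) \<longrightarrow> (\<forall>j\<in>{1..n}. c j = 0))
   \<and> (\<forall>v\<in>W. \<exists>c. v = (\<lambda>i. \<Sum>j=1..n. c j * b j i))"

text \<open>Words in generators indexed by 'i: a letter (i, False) is x_i, (i, True) is x_i^-1.\<close>
type_synonym 'i word = "('i \<times> bool) list"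

definition word_eval :: "('a, 'b) monoid_scheme \<Rightarrow> ('i \<Rightarrow> 'a) \<Rightarrow> 'i word \<Rightarrow> 'a" where
  "word_eval G x w = foldr (\<lambda>(i, e) acc. (if e then inv\<^bsub>G\<^esub> (x i) else x i) \<otimes>\<^bsub>G\<^esub> acc) w \<one>\<^bsub>G\<^esub>"

text \<open>The congruence on words generated by free cancellation and the defining relations:
  two words are equal in the presented group iff they are related.\<close>
inductive word_equiv :: "('i word \<times> 'i word) set \<Rightarrow> 'i word \<Rightarrow> 'i word \<Rightarrow> bool"
  for R where
  refl: "word_equiv R w w"
| sym: "word_equiv R u v \<Longrightarrow> word_equiv R v u"
| trans: "word_equiv R u v \<Longrightarrow> word_equiv R v w \<Longrightarrow> word_equiv R u w"
| cancel: "word_equiv R (u @ [(i, e), (i, \<not> e)] @ v) (u @ v)"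
| rel: "(l, r) \<in> R \<Longrightarrow> word_equiv R (u @ l @ v) (u @ r @ v)"

text \<open>G has the presentation < x_i (i in I) | l = r for (l, r) in R >: the x_i lie in G and
  generate it, the relations hold in G, and every relation holding in G between words
  in the generators follows from the defining relations (i.e. the canonical map from the
  presented group to G is an isomorphism).\<close>
definition has_presentation ::
  "('a, 'b) monoid_scheme \<Rightarrow> 'i set \<Rightarrow> ('i \<Rightarrow> 'a) \<Rightarrow> ('i word \<times> 'i word) set \<Rightarrow> bool" where
  "has_presentation G I x R \<longleftrightarrow>
     x ` I \<subseteq> carrier G
   \<and> generate G (x ` I) = carrier G
   \<and> (\<forall>(l, r)\<in>R. word_eval G x l = word_eval G x r)
   \<and> (\<forall>u v. set (map fst u) \<subseteq> I \<longrightarrow> set (map fst v) \<subseteq> I \<longrightarrow>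
        word_eval G x u = word_eval G x v \<longrightarrow> word_equiv R u v)"

definition gen_power :: "'i \<Rightarrow> int \<Rightarrow> 'i word" where
  "gen_power j m = replicate (nat \<bar>m\<bar>) (j, m < 0)"

definition GM_relations :: "nat \<Rightarrow> (nat \<Rightarrow> nat \<Rightarrow> int) \<Rightarrow> (nat word \<times> nat word) set" where
  "GM_relations N M =
     {([(i, False), (j, False)], [(j, False), (i, False)]) | i j. i \<in> {1..N} \<and> j \<in> {1..N}}
   \<union> {([(0, False), (i, False), (0, True)], concat (map (\<lambda>j. gen_power j (M i j)) [1..<N+1])) | i.
        i \<in> {1..N}}"

definition HC_dom :: "nat \<Rightarrow> (complex \<times> (nat \<Rightarrow> complex)) set" where
  "HC_dom n = {(w, z). Im w > 0 \<and> supp_vec n z}"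

definition GM_gen :: "nat \<Rightarrow> real \<Rightarrow> (nat \<Rightarrow> real) \<Rightarrow> (nat \<Rightarrow> nat \<Rightarrow> complex) \<Rightarrow>
    (nat \<Rightarrow> nat \<Rightarrow> complex) \<Rightarrow> nat \<Rightarrow> (complex \<times> (nat \<Rightarrow> complex) \<Rightarrow> complex \<times> (nat \<Rightarrow> complex))" where
  "GM_gen n \<alpha> a b R k =
     (\<lambda>p \<in> HC_dom n. case p of (w, z) \<Rightarrow>
        if k = 0 then (complex_of_real \<alpha> * w,
                       \<lambda>j. if j \<in> {1..n} then (\<Sum>l=1..n. R l j * z l) else 0)
        else (w + complex_of_real (a k), \<lambda>j. z j + (if j \<in> {1..n} then b j k else 0)))"

definition GM_group :: "nat \<Rightarrow> real \<Rightarrow> (nat \<Rightarrow> real) \<Rightarrow> (nat \<Rightarrow> nat \<Rightarrow> complex) \<Rightarrow>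
    (nat \<Rightarrow> nat \<Rightarrow> complex) \<Rightarrow> (complex \<times> (nat \<Rightarrow> complex) \<Rightarrow> complex \<times> (nat \<Rightarrow> complex)) monoid" where
  "GM_group n \<alpha> a b R =
     (BijGroup (HC_dom n))\<lparr>carrier :=
        generate (BijGroup (HC_dom n)) (GM_gen n \<alpha> a b R ` {0..2*n+1})\<rparr>"

end

theory Submission
  imports Defs "Jordan_Normal_Form.Determinant"
begin

lemma rank_transpose_lemma:
  fixes F :: "nat \<Rightarrow> nat \<Rightarrow> 'a::field"
  assumes inj: "\<And>x. (\<forall>i<N. (\<Sum>j<N. F i j * x j) = 0) \<Longrightarrow> (\<forall>j<N. x j = 0)"
  assumes y: "\<forall>j<N. (\<Sum>i<N. F i j * y i) = 0"
  shows "\<forall>i<N. y i = 0"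
proof -
  define A where "A = mat N N (\<lambda>(i,j). F i j)"
  have A: "A \<in> carrier_mat N N" by (simp add: A_def)
  have "det A \<noteq> 0"
  proof
    assume "det A = 0"
    then obtain v where v: "v \<in> carrier_vec N" "v \<noteq> 0\<^sub>v N" "A *\<^sub>v v = 0\<^sub>v N"
      using det_0_iff_vec_prod_zero[OF A] by auto
    have "\<forall>i<N. (\<Sum>j<N. F i j * (v $ j)) = 0"
    proof (intro allI impI)
      fix i assume i: "i < N"
      have "(A *\<^sub>v v) $ i = 0" using v i by simp
      then show "(\<Sum>j<N. F i j * (v $ j)) = 0" using i v(1)
        by (simp add: A_def mult_mat_vec_def scalar_prod_def lessThan_atLeast0)
    qed
    from inj[OF this] have "v = 0\<^sub>v N" using v(1) by (intro eq_vecI) auto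
    with v show False by simp
  qed
  then have dT: "det (transpose_mat A) \<noteq> 0" using det_transpose[OF A] by simp
  have AT: "transpose_mat A \<in> carrier_mat N N" using A by simp
  define w where "w = vec N y"
  have "transpose_mat A *\<^sub>v w = 0\<^sub>v N"
  proof (intro eq_vecI)
    fix i assume i: "i < dim_vec (0\<^sub>v N :: 'a vec)"
    then show "(transpose_mat A *\<^sub>v w) $ i = 0\<^sub>v N $ i" using y
      by (simp add: A_def w_def mult_mat_vec_def scalar_prod_def lessThan_atLeast0 mult.commute)
  qed (simp add: A_def)
  moreover have "w \<in> carrier_vec N" by (simp add: w_def)
  ultimately have "w = 0\<^sub>v N" using det_0_iff_vec_prod_zero[OF AT] dT by auto
  then show ?thesis unfolding w_def by (metis index_vec index_zero_vec(1))
qed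

lemma surj_lemma:
  fixes F :: "nat \<Rightarrow> nat \<Rightarrow> 'a::field"
  assumes inj: "\<And>x. (\<forall>i<N. (\<Sum>j<N. F i j * x j) = 0) \<Longrightarrow> (\<forall>j<N. x j = 0)"
  shows "\<exists>x. \<forall>i<N. (\<Sum>j<N. F i j * x j) = y i"
proof -
  define A where "A = mat N N (\<lambda>(i,j). F i j)"
  have A: "A \<in> carrier_mat N N" by (simp add: A_def)
  have "det A \<noteq> 0"
  proof
    assume "det A = 0"
    then obtain v where v: "v \<in> carrier_vec N" "v \<noteq> 0\<^sub>v N" "A *\<^sub>v v = 0\<^sub>v N"
      using det_0_iff_vec_prod_zero[OF A] by auto
    have "\<forall>i<N. (\<Sum>j<N. F i j * (v $ j)) = 0"
    proof (intro allI impI)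
      fix i assume i: "i < N"
      have "(A *\<^sub>v v) $ i = 0" using v i by simp
      then show "(\<Sum>j<N. F i j * (v $ j)) = 0" using i v(1)
        by (simp add: A_def mult_mat_vec_def scalar_prod_def lessThan_atLeast0)
    qed
    from inj[OF this] have "v = 0\<^sub>v N" using v(1) by (intro eq_vecI) auto
    with v show False by simp
  qed
  from det_non_zero_imp_unit[OF A this, of "()"]
  obtain B where B: "B \<in> carrier_mat N N" "A * B = 1\<^sub>m N"
    unfolding Units_def ring_mat_def by auto
  define w where "w = B *\<^sub>v vec N y"
  have "A *\<^sub>v w = vec N y" unfolding w_def
    using B A by (metis assoc_mult_mat_vec one_mult_mat_vec vec_carrier)
  moreover have w: "w \<in> carrier_vec N" using B by (simp add: w_def)
  ultimately have "\<forall>i<N. (\<Sum>j<N. F i j * (w $ j)) = y i"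
  proof (intro allI impI)
    fix i assume i: "i < N" and e: "A *\<^sub>v w = vec N y"
    from arg_cong[OF e, of "\<lambda>v. v $ i"] i w show "(\<Sum>j<N. F i j * (w $ j)) = y i"
      by (simp add: A_def mult_mat_vec_def scalar_prod_def lessThan_atLeast0)
  qed
  then show ?thesis by blast
qed

definition opm :: "nat \<Rightarrow> (nat \<Rightarrow> nat \<Rightarrow> complex) \<Rightarrow> complex \<Rightarrow> (nat \<Rightarrow> complex) \<Rightarrow> nat \<Rightarrow> complex" where
  "opm N A l v = (\<lambda>i. matvec N A v i - l * v i)"

lemma gen_eigenspace_alt:
  "gen_eigenspace N A l = {v. supp_vec N v \<and> (opm N A l ^^ N) v = (\<lambda>_. 0)}"
proof -
  have "(\<lambda>x. \<lambda>i. matvec N A x i - l * x i) = opm N A l" by (rule ext) (simp add: opm_def)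
  then show ?thesis unfolding gen_eigenspace_def by simp
qed

lemma matvec_add: "matvec N A (\<lambda>i. v i + w i) = (\<lambda>i. matvec N A v i + matvec N A w i)"
  by (auto simp: matvec_def sum.distrib distrib_left)

lemma matvec_scale: "matvec N A (\<lambda>i. c * v i) = (\<lambda>i. c * matvec N A v i)"
  by (auto simp: matvec_def sum_distrib_left mult.left_commute)

lemma matvec_diff: "matvec N A (\<lambda>i. v i - w i) = (\<lambda>i. matvec N A v i - matvec N A w i)"
  by (auto simp: matvec_def sum_subtractf right_diff_distrib)

lemma matvec_zero: "matvec N A (\<lambda>i. 0) = (\<lambda>i. 0)"
  by (auto simp: matvec_def)

lemma matvec_sum: "matvec N A (\<lambda>i. \<Sum>l\<in>S. f l i) = (\<lambda>i. \<Sum>l\<in>S. matvec N A (f l) i)"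
proof (rule ext)
  fix i
  show "matvec N A (\<lambda>i. \<Sum>l\<in>S. f l i) i = (\<Sum>l\<in>S. matvec N A (f l) i)"
  proof (cases "i \<in> {1..N}")
    case True
    then have "matvec N A (\<lambda>i. \<Sum>l\<in>S. f l i) i = (\<Sum>j=1..N. \<Sum>l\<in>S. A i j * f l j)"
      by (simp add: matvec_def sum_distrib_left)
    also have "\<dots> = (\<Sum>l\<in>S. \<Sum>j=1..N. A i j * f l j)" by (rule sum.swap)
    finally show ?thesis using True by (simp add: matvec_def)
  qed (auto simp: matvec_def)
qed

lemma opm_add: "opm N A m (\<lambda>i. v i + w i) = (\<lambda>i. opm N A m v i + opm N A m w i)"
  by (auto simp: opm_def matvec_add algebra_simps)

lemma opm_scale: "opm N A m (\<lambda>i. c * v i) = (\<lambda>i. c * opm N A m v i)"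
  by (auto simp: opm_def matvec_scale algebra_simps)

lemma opm_zero: "opm N A m (\<lambda>i. 0) = (\<lambda>i. 0)"
  by (auto simp: opm_def matvec_zero)

lemma opm_sum: "opm N A m (\<lambda>i. \<Sum>l\<in>S. f l i) = (\<lambda>i. \<Sum>l\<in>S. opm N A m (f l) i)"
  by (auto simp: opm_def matvec_sum sum_subtractf sum_distrib_left)

lemma opm_pow_add: "(opm N A m ^^ k) (\<lambda>i. v i + w i) = (\<lambda>i. (opm N A m ^^ k) v i + (opm N A m ^^ k) w i)"
  by (induction k) (auto simp: opm_add)

lemma opm_pow_scale: "(opm N A m ^^ k) (\<lambda>i. c * v i) = (\<lambda>i. c * (opm N A m ^^ k) v i)"
  by (induction k) (auto simp: opm_scale)

lemma opm_pow_zero: "(opm N A m ^^ k) (\<lambda>i. 0) = (\<lambda>i. 0)"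
  by (induction k) (auto simp: opm_zero)

lemma opm_pow_sum: "(opm N A m ^^ k) (\<lambda>i. \<Sum>l\<in>S. f l i) = (\<lambda>i. \<Sum>l\<in>S. (opm N A m ^^ k) (f l) i)"
  by (induction k) (auto simp: opm_sum)

lemma opm_comm: "opm N A m (opm N A l v) = opm N A l (opm N A m v)"
proof -
  have "opm N A m (opm N A l v) = (\<lambda>i. matvec N A (matvec N A v) i - l * matvec N A v i
        - m * (matvec N A v i - l * v i))"
    by (simp add: opm_def matvec_diff matvec_scale)
  moreover have "opm N A l (opm N A m v) = (\<lambda>i. matvec N A (matvec N A v) i - m * matvec N A v i
        - l * (matvec N A v i - m * v i))"
    by (simp add: opm_def matvec_diff matvec_scale)
  ultimately show ?thesis by (simp add: algebra_simps)
qed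

lemma opm_pow_comm: "opm N A m ((opm N A l ^^ k) v) = (opm N A l ^^ k) (opm N A m v)"
proof (induction k)
  case 0 then show ?case by simp
next
  case (Suc k)
  have "opm N A m ((opm N A l ^^ Suc k) v) = opm N A l (opm N A m ((opm N A l ^^ k) v))"
    by (simp add: opm_comm)
  also have "\<dots> = (opm N A l ^^ Suc k) (opm N A m v)" using Suc by simp
  finally show ?case .
qed

lemma opm_pow_pow_comm: "(opm N A m ^^ j) ((opm N A l ^^ k) v) = (opm N A l ^^ k) ((opm N A m ^^ j) v)"
proof (induction j)
  case 0 then show ?case by simp
next
  case (Suc j)
  have "(opm N A m ^^ Suc j) ((opm N A l ^^ k) v) = opm N A m ((opm N A l ^^ k) ((opm N A m ^^ j) v))"
    using Suc by simp
  also have "\<dots> = (opm N A l ^^ k) ((opm N A m ^^ Suc j) v)" by (simp add: opm_pow_comm)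
  finally show ?case .
qed

lemma supp_vec_opm: "supp_vec N v \<Longrightarrow> supp_vec N (opm N A m v)"
  by (auto simp: supp_vec_def opm_def matvec_def)

lemma supp_vec_opm_pow: "supp_vec N v \<Longrightarrow> supp_vec N ((opm N A m ^^ k) v)"
  by (induction k) (auto simp: supp_vec_opm)

lemma supp_vec_add: "supp_vec N (v::nat\<Rightarrow>complex) \<Longrightarrow> supp_vec N w \<Longrightarrow> supp_vec N (\<lambda>i. v i + w i)"
  by (auto simp: supp_vec_def)

lemma supp_vec_scale: "supp_vec N (v::nat\<Rightarrow>complex) \<Longrightarrow> supp_vec N (\<lambda>i. c * v i)"
  by (auto simp: supp_vec_def)

lemma supp_vec_sum: "(\<And>l. l \<in> S \<Longrightarrow> supp_vec N (f l :: nat \<Rightarrow> complex)) \<Longrightarrow> supp_vec N (\<lambda>i. \<Sum>l\<in>S. f l i)"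
  by (auto simp: supp_vec_def)

lemma gen_zero: "(\<lambda>_. 0) \<in> gen_eigenspace N A l"
  by (auto simp: gen_eigenspace_alt supp_vec_def opm_pow_zero)

lemma gen_add: "v \<in> gen_eigenspace N A l \<Longrightarrow> w \<in> gen_eigenspace N A l \<Longrightarrow> (\<lambda>i. v i + w i) \<in> gen_eigenspace N A l"
  by (auto simp: gen_eigenspace_alt supp_vec_add opm_pow_add)

lemma gen_scale: "v \<in> gen_eigenspace N A l \<Longrightarrow> (\<lambda>i. c * v i) \<in> gen_eigenspace N A l"
  by (auto simp: gen_eigenspace_alt supp_vec_scale opm_pow_scale)

lemma gen_sum: "(\<And>j. j \<in> S \<Longrightarrow> f j \<in> gen_eigenspace N A l) \<Longrightarrow> (\<lambda>i. \<Sum>j\<in>S. f j i) \<in> gen_eigenspace N A l"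
proof (induction S rule: infinite_finite_induct)
  case (infinite S) then show ?case using gen_zero by simp
next
  case empty then show ?case using gen_zero by simp
next
  case (insert x F)
  then show ?case using gen_add[of "f x" N A l "\<lambda>i. \<Sum>j\<in>F. f j i"] by simp
qed

lemma gen_opm_pow: "v \<in> gen_eigenspace N A l \<Longrightarrow> (opm N A m ^^ k) v \<in> gen_eigenspace N A l"
proof -
  assume v: "v \<in> gen_eigenspace N A l"
  have "(opm N A l ^^ N) ((opm N A m ^^ k) v) = (opm N A m ^^ k) ((opm N A l ^^ N) v)"
    by (rule opm_pow_pow_comm)
  also have "\<dots> = (\<lambda>_. 0)" using v by (simp add: gen_eigenspace_alt opm_pow_zero)
  finally show ?thesis using v by (simp add: gen_eigenspace_alt supp_vec_opm_pow)
qed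

lemma gen_opm: "v \<in> gen_eigenspace N A l \<Longrightarrow> opm N A m v \<in> gen_eigenspace N A l"
  using gen_opm_pow[where k=1] by simp

lemma gen_kill:
  assumes v: "v \<in> gen_eigenspace N A l" and o: "opm N A m v = (\<lambda>_. 0)" and ne: "l \<noteq> m"
  shows "v = (\<lambda>_. 0)"
proof -
  have mv: "matvec N A v = (\<lambda>i. m * v i)" using o by (auto simp: opm_def fun_eq_iff)
  have ol: "opm N A l v = (\<lambda>i. (m - l) * v i)" by (auto simp: opm_def mv algebra_simps)
  have "(opm N A l ^^ k) v = (\<lambda>i. (m - l) ^ k * v i)" for k
  proof (induction k)
    case 0 then show ?case by simp
  next
    case (Suc k)
    have "(opm N A l ^^ Suc k) v = (opm N A l ^^ k) (opm N A l v)" by (simp only: funpow_Suc_right o_apply)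
    also have "\<dots> = (\<lambda>i. (m - l) * (opm N A l ^^ k) v i)" by (simp add: ol opm_pow_scale)
    finally show ?case using Suc by (simp add: mult.assoc)
  qed
  moreover have "(opm N A l ^^ N) v = (\<lambda>_. 0)" using v by (simp add: gen_eigenspace_alt)
  ultimately have "(\<lambda>i. (m - l) ^ N * v i) = (\<lambda>_. 0)" by simp
  then have "\<forall>i. (m - l) ^ N * v i = 0" by (simp add: fun_eq_iff)
  then show ?thesis using ne by (auto simp: fun_eq_iff)
qed

lemma gen_inj_pow:
  assumes v: "v \<in> gen_eigenspace N A l" and o: "(opm N A m ^^ k) v = (\<lambda>_. 0)" and ne: "l \<noteq> m"
  shows "v = (\<lambda>_. 0)"
  using v o
proof (induction k arbitrary: v)
  case 0 then show ?case by simp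
next
  case (Suc k)
  have "(opm N A m ^^ k) (opm N A m v) = (\<lambda>_. 0)" using Suc.prems(2) by (simp add: funpow_swap1)
  then have "opm N A m v = (\<lambda>_. 0)" using Suc.IH gen_opm[OF Suc.prems(1)] by blast
  then show ?case using gen_kill[OF Suc.prems(1) _ ne] by blast
qed

lemma gen_indep:
  assumes "finite S" and "\<And>l. l \<in> S \<Longrightarrow> f l \<in> gen_eigenspace N A l"
    and "(\<lambda>i. \<Sum>l\<in>S. f l i) = (\<lambda>_. 0)"
  shows "\<forall>l\<in>S. f l = (\<lambda>_. 0)"
  using assms
proof (induction S arbitrary: f rule: finite_induct)
  case empty then show ?case by simp
next
  case (insert m S)
  let ?P = "opm N A m ^^ N"
  have "?P (\<lambda>i. \<Sum>l\<in>insert m S. f l i) = (\<lambda>_. 0)" using insert.prems(2) by (simp add: opm_pow_zero)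
  then have "(\<lambda>i. \<Sum>l\<in>insert m S. ?P (f l) i) = (\<lambda>_. 0)" by (simp add: opm_pow_sum)
  moreover have "?P (f m) = (\<lambda>_. 0)" using insert.prems(1)[of m] by (simp add: gen_eigenspace_alt)
  ultimately have "(\<lambda>i. \<Sum>l\<in>S. ?P (f l) i) = (\<lambda>_. 0)" using insert.hyps by (simp add: fun_eq_iff)
  moreover have "\<And>l. l \<in> S \<Longrightarrow> ?P (f l) \<in> gen_eigenspace N A l" using insert.prems(1) gen_opm_pow by blast
  ultimately have P0: "\<forall>l\<in>S. ?P (f l) = (\<lambda>_. 0)" using insert.IH[of "\<lambda>l. ?P (f l)"] by blast
  have S0: "\<forall>l\<in>S. f l = (\<lambda>_. 0)"
  proof
    fix l assume l: "l \<in> S"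
    then have "l \<noteq> m" using insert.hyps(2) by auto
    moreover have "f l \<in> gen_eigenspace N A l" using insert.prems(1) l by simp
    moreover have "?P (f l) = (\<lambda>_. 0)" using P0 l by simp
    ultimately show "f l = (\<lambda>_. 0)" using gen_inj_pow by blast
  qed
  then have "(\<lambda>i. \<Sum>l\<in>S. f l i) = (\<lambda>_. 0)" by (simp add: fun_eq_iff)
  then have "f m = (\<lambda>_. 0)" using insert.prems(2) insert.hyps by (simp add: fun_eq_iff)
  then show ?case using S0 by simp
qed

lemma opm_cnj:
  assumes real: "\<And>i j. cnj (A i j) = A i j"
  shows "opm N A (cnj m) (\<lambda>i. cnj (v i)) = (\<lambda>i. cnj (opm N A m v i))"
  by (auto simp: opm_def matvec_def real)

lemma opm_pow_cnj:
  assumes real: "\<And>i j. cnj (A i j) = A i j"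
  shows "(opm N A (cnj m) ^^ k) (\<lambda>i. cnj (v i)) = (\<lambda>i. cnj ((opm N A m ^^ k) v i))"
  by (induction k) (auto simp: opm_cnj[OF real])

lemma gen_cnj:
  assumes real: "\<And>i j. cnj (A i j) = A i j" and v: "v \<in> gen_eigenspace N A m"
  shows "(\<lambda>i. cnj (v i)) \<in> gen_eigenspace N A (cnj m)"
  using v by (auto simp: gen_eigenspace_alt opm_pow_cnj[OF real] supp_vec_def fun_eq_iff)

lemma rank1:
  fixes G :: "nat \<Rightarrow> nat \<Rightarrow> 'a::field"
  assumes inj: "\<And>x. (\<forall>i\<in>{1..N}. (\<Sum>j=1..N. G i j * x j) = 0) \<Longrightarrow> (\<forall>j\<in>{1..N}. x j = 0)"
  assumes y: "\<forall>j\<in>{1..N}. (\<Sum>i=1..N. G i j * y i) = 0"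
  shows "\<forall>i\<in>{1..N}. y i = 0"
proof -
  have sh: "(\<Sum>i=1..N. g i) = (\<Sum>i<N. g (Suc i))" for g :: "nat \<Rightarrow> 'a"
    using sum.atLeast1_atMost_eq[of g N] by simp
  have "\<forall>i<N. y (Suc i) = 0"
  proof (rule rank_transpose_lemma[of N "\<lambda>i j. G (Suc i) (Suc j)"])
    fix x assume x: "\<forall>i<N. (\<Sum>j<N. G (Suc i) (Suc j) * x j) = 0"
    define x' where "x' j = x (j - 1)" for j
    have "\<forall>i\<in>{1..N}. (\<Sum>j=1..N. G i j * x' j) = 0"
    proof
      fix i assume i: "i \<in> {1..N}"
      then obtain i' where i': "i = Suc i'" "i' < N" by (cases i) auto
      show "(\<Sum>j=1..N. G i j * x' j) = 0" unfolding sh using x i' by (simp add: x'_def)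
    qed
    from inj[OF this] have h: "\<forall>j\<in>{1..N}. x' j = 0" .
    show "\<forall>j<N. x j = 0"
    proof (intro allI impI)
      fix j assume "j < N"
      then have "x' (Suc j) = 0" using h by auto
      then show "x j = 0" by (simp add: x'_def)
    qed
  next
    show "\<forall>j<N. (\<Sum>i<N. G (Suc i) (Suc j) * y (Suc i)) = 0"
    proof (intro allI impI)
      fix j assume "j < N"
      then have "(\<Sum>i=1..N. G i (Suc j) * y i) = 0" using y by auto
      then show "(\<Sum>i<N. G (Suc i) (Suc j) * y (Suc i)) = 0" by (simp only: sh)
    qed
  qed
  then show ?thesis
  proof (intro ballI)
    fix i assume h: "\<forall>i<N. y (Suc i) = 0" and i: "i \<in> {1..N}"
    then obtain i' where "i = Suc i'" "i' < N" by (cases i) auto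
    then show "y i = 0" using h by simp
  qed
qed

lemma surj1:
  fixes G :: "nat \<Rightarrow> nat \<Rightarrow> 'a::field"
  assumes inj: "\<And>x. (\<forall>i\<in>{1..N}. (\<Sum>j=1..N. G i j * x j) = 0) \<Longrightarrow> (\<forall>j\<in>{1..N}. x j = 0)"
  shows "\<exists>x. \<forall>i\<in>{1..N}. (\<Sum>j=1..N. G i j * x j) = y i"
proof -
  have sh: "(\<Sum>i=1..N. g i) = (\<Sum>i<N. g (Suc i))" for g :: "nat \<Rightarrow> 'a"
    using sum.atLeast1_atMost_eq[of g N] by simp
  have "\<exists>x. \<forall>i<N. (\<Sum>j<N. G (Suc i) (Suc j) * x j) = y (Suc i)"
  proof (rule surj_lemma)
    fix x assume x: "\<forall>i<N. (\<Sum>j<N. G (Suc i) (Suc j) * x j) = 0"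
    define x' where "x' j = x (j - 1)" for j
    have "\<forall>i\<in>{1..N}. (\<Sum>j=1..N. G i j * x' j) = 0"
    proof
      fix i assume i: "i \<in> {1..N}"
      then obtain i' where i': "i = Suc i'" "i' < N" by (cases i) auto
      show "(\<Sum>j=1..N. G i j * x' j) = 0" unfolding sh using x i' by (simp add: x'_def)
    qed
    from inj[OF this] have h: "\<forall>j\<in>{1..N}. x' j = 0" .
    show "\<forall>j<N. x j = 0"
    proof (intro allI impI)
      fix j assume "j < N"
      then have "x' (Suc j) = 0" using h by auto
      then show "x j = 0" by (simp add: x'_def)
    qed
  qed
  then obtain x where x: "\<forall>i<N. (\<Sum>j<N. G (Suc i) (Suc j) * x j) = y (Suc i)" by blast
  define x' where "x' j = x (j - 1)" for j
  have "\<forall>i\<in>{1..N}. (\<Sum>j=1..N. G i j * x' j) = y i"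
  proof
    fix i assume i: "i \<in> {1..N}"
    then obtain i' where i': "i = Suc i'" "i' < N" by (cases i) auto
    show "(\<Sum>j=1..N. G i j * x' j) = y i" unfolding sh using x i' by (simp add: x'_def)
  qed
  then show ?thesis by blast
qed

lemma split3:
  fixes g :: "nat \<Rightarrow> 'a::comm_monoid_add"
  shows "(\<Sum>k\<in>{1..2*n+1}. g k) = g 1 + (\<Sum>j=1..n. g (j+1)) + (\<Sum>j=1..n. g (j+n+1))"
proof -
  have e: "{1..2*n+1} = insert 1 ((\<lambda>j. j+1) ` {1..n} \<union> (\<lambda>j. j+n+1) ` {1..n})"
  proof (rule Set.set_eqI)
    fix x
    show "x \<in> {1..2*n+1} \<longleftrightarrow> x \<in> insert 1 ((\<lambda>j. j+1) ` {1..n} \<union> (\<lambda>j. j+n+1) ` {1..n})"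
    proof
      assume x: "x \<in> {1..2*n+1}"
      show "x \<in> insert 1 ((\<lambda>j. j+1) ` {1..n} \<union> (\<lambda>j. j+n+1) ` {1..n})"
      proof (cases "x = 1")
        case False
        show ?thesis
        proof (cases "x \<le> n+1")
          case True
          then have "x = (x-1)+1 \<and> x - 1 \<in> {1..n}" using x False by auto
          then show ?thesis by blast
        next
          case F2: False
          then have "x = (x-n-1)+n+1 \<and> x-n-1 \<in> {1..n}" using x by auto
          then show ?thesis by blast
        qed
      qed simp
    next
      assume "x \<in> insert 1 ((\<lambda>j. j+1) ` {1..n} \<union> (\<lambda>j. j+n+1) ` {1..n})"
      then show "x \<in> {1..2*n+1}" by auto
    qed
  qed
  have d: "(\<lambda>j. j+1) ` {1..n} \<inter> (\<lambda>j. j+n+1) ` {1..n} = {}" by auto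
  have n1: "1 \<notin> (\<lambda>j. j+1) ` {1..n} \<union> (\<lambda>j. j+n+1) ` {1..n}" by auto
  have "(\<Sum>k\<in>{1..2*n+1}. g k) = g 1 + (\<Sum>k\<in>(\<lambda>j. j+1) ` {1..n}. g k) + (\<Sum>k\<in>(\<lambda>j. j+n+1) ` {1..n}. g k)"
    unfolding e using d n1 by (simp add: sum.union_disjoint add.assoc)
  also have "(\<Sum>k\<in>(\<lambda>j. j+1) ` {1..n}. g k) = (\<Sum>j=1..n. g (j+1))"
    by (rule sum.reindex_cong[where l="\<lambda>j. j+1"]) (auto simp: inj_on_def)
  also have "(\<Sum>k\<in>(\<lambda>j. j+n+1) ` {1..n}. g k) = (\<Sum>j=1..n. g (j+n+1))"
    by (rule sum.reindex_cong[where l="\<lambda>j. j+n+1"]) (auto simp: inj_on_def)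
  finally show ?thesis .
qed

locale GMset =
  fixes n :: nat and M :: "nat \<Rightarrow> nat \<Rightarrow> int" and \<alpha> :: real
    and a :: "nat \<Rightarrow> real" and b :: "nat \<Rightarrow> nat \<Rightarrow> complex" and R :: "nat \<Rightarrow> nat \<Rightarrow> complex"
  assumes n: "n \<ge> 1"
    and real_eig: "{l. is_eigenvalue (2*n+1) (cmat M) l \<and> Im l = 0} = {complex_of_real \<alpha>}"
    and alpha_pos: "\<alpha> > 0" and alpha_ne1: "\<alpha> \<noteq> 1"
    and a_supp: "supp_vec (2*n+1) a" and a_nz: "a \<noteq> (\<lambda>_. 0)"
    and a_eig: "matvec (2*n+1) (\<lambda>i j. real_of_int (M i j)) a = (\<lambda>i. \<alpha> * a i)"
    and b_basis: "is_basis_of n b (upper_gen_space (2*n+1) (cmat M))"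
    and R_def: "\<forall>j\<in>{1..n}. matvec (2*n+1) (cmat M) (b j) = (\<lambda>i. \<Sum>l=1..n. R l j * b l i)"
begin

abbreviation "NN \<equiv> 2*n+1"
abbreviation "AA \<equiv> cmat M"
definition "UU = {l. is_eigenvalue NN AA l \<and> Im l > 0}"

lemma bW: "\<forall>j\<in>{1..n}. b j \<in> upper_gen_space NN AA"
  using b_basis by (simp add: is_basis_of_def)

lemma bi: "(\<lambda>i. \<Sum>j=1..n. c j * b j i) = (\<lambda>_. 0) \<Longrightarrow> \<forall>j\<in>{1..n}. c j = 0"
  using b_basis by (simp add: is_basis_of_def)

lemma fb_ex: "\<exists>fb. \<forall>j\<in>{1..n}. (\<forall>l\<in>UU. fb j l \<in> gen_eigenspace NN AA l) \<and> b j = (\<lambda>i. \<Sum>l\<in>UU. fb j l i)"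
proof -
  have "\<forall>j\<in>{1..n}. \<exists>f. (\<forall>l\<in>UU. f l \<in> gen_eigenspace NN AA l) \<and> b j = (\<lambda>i. \<Sum>l\<in>UU. f l i)"
    using bW unfolding upper_gen_space_def UU_def by auto
  then show ?thesis by (rule bchoice)
qed

definition "fb = (SOME fb. \<forall>j\<in>{1..n}. (\<forall>l\<in>UU. fb j l \<in> gen_eigenspace NN AA l) \<and> b j = (\<lambda>i. \<Sum>l\<in>UU. fb j l i))"

lemma fb: "\<forall>j\<in>{1..n}. (\<forall>l\<in>UU. fb j l \<in> gen_eigenspace NN AA l) \<and> b j = (\<lambda>i. \<Sum>l\<in>UU. fb j l i)"
  unfolding fb_def using someI_ex[OF fb_ex] .

lemma fb_gen: "j \<in> {1..n} \<Longrightarrow> l \<in> UU \<Longrightarrow> fb j l \<in> gen_eigenspace NN AA l"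
  using fb by blast

lemma b_eq: "j \<in> {1..n} \<Longrightarrow> b j i = (\<Sum>l\<in>UU. fb j l i)"
  using fb by (metis (no_types, lifting))

lemma finite_UU: "finite UU"
proof (rule ccontr)
  assume "\<not> finite UU"
  then have "\<forall>j\<in>{1..n}. b j = (\<lambda>_. 0)" using b_eq by (auto simp: fun_eq_iff)
  then have "(\<lambda>i. \<Sum>j=1..n. 1 * b j i) = (\<lambda>_. 0)" by (simp add: fun_eq_iff)
  from bi[OF this] show False using n by auto
qed

lemma supp_b: "j \<in> {1..n} \<Longrightarrow> supp_vec NN (b j)"
proof -
  assume j: "j \<in> {1..n}"
  have "supp_vec NN (\<lambda>i. \<Sum>l\<in>UU. fb j l i)"
    by (rule supp_vec_sum) (use fb_gen[OF j] in \<open>auto simp: gen_eigenspace_alt\<close>)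
  moreover have "b j = (\<lambda>i. \<Sum>l\<in>UU. fb j l i)" using b_eq[OF j] by auto
  ultimately show ?thesis by simp
qed

lemma AA_real: "cnj (AA i j) = AA i j"
  by (simp add: cmat_def)

definition "ac = (\<lambda>i. complex_of_real (a i))"

lemma ac_eig: "matvec NN AA ac = (\<lambda>i. complex_of_real \<alpha> * ac i)"
proof -
  have "matvec NN AA ac = (\<lambda>i. complex_of_real (matvec NN (\<lambda>i j. real_of_int (M i j)) a i))"
    by (auto simp: matvec_def cmat_def ac_def)
  also have "\<dots> = (\<lambda>i. complex_of_real \<alpha> * ac i)" unfolding a_eig ac_def by simp
  finally show ?thesis .
qed

lemma ac_gen: "ac \<in> gen_eigenspace NN AA (complex_of_real \<alpha>)"
proof -
  have o: "opm NN AA (complex_of_real \<alpha>) ac = (\<lambda>_. 0)" unfolding opm_def ac_eig by simp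
  have "(opm NN AA (complex_of_real \<alpha>) ^^ Suc (2*n)) ac = (\<lambda>_. 0)"
    by (simp only: funpow_Suc_right o_apply o opm_pow_zero)
  moreover have "supp_vec NN ac" using a_supp by (simp add: supp_vec_def ac_def)
  ultimately show ?thesis by (simp add: gen_eigenspace_alt)
qed

lemma trans_indep:
  fixes d :: "nat \<Rightarrow> real"
  assumes da: "(\<Sum>k=1..NN. d k * a k) = 0"
    and db: "\<forall>j\<in>{1..n}. (\<Sum>k=1..NN. complex_of_real (d k) * b j k) = 0"
  shows "\<forall>k\<in>{1..NN}. d k = 0"
proof -
  define col where "col k i = (if k = 1 then ac i else if k \<le> n+1 then b (k-1) i else cnj (b (k-n-1) i))" for k i
  define \<alpha>' where "\<alpha>' = complex_of_real \<alpha>"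
  have a1: "\<alpha>' \<notin> UU" by (auto simp: UU_def \<alpha>'_def)
  have a2: "\<alpha>' \<notin> cnj ` UU"
  proof
    assume "\<alpha>' \<in> cnj ` UU"
    then obtain u where "u \<in> UU" "\<alpha>' = cnj u" by auto
    then have "Im \<alpha>' < 0" by (simp add: UU_def)
    then show False by (simp add: \<alpha>'_def)
  qed
  have a3: "UU \<inter> cnj ` UU = {}" by (auto simp: UU_def)
  have fin: "finite UU" by (rule finite_UU)
  have inj: "\<forall>j\<in>{1..NN}. x j = 0" if x: "\<forall>i\<in>{1..NN}. (\<Sum>k=1..NN. col k i * x k) = 0" for x
  proof -
    have expand: "(\<Sum>k=1..NN. col k i * x k) = x 1 * ac i + (\<Sum>j=1..n. x (j+1) * b j i)
          + (\<Sum>j=1..n. x (j+n+1) * cnj (b j i))" for i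
      unfolding split3 by (simp add: col_def mult.commute)
    have tot: "x 1 * ac i + (\<Sum>j=1..n. x (j+1) * b j i) + (\<Sum>j=1..n. x (j+n+1) * cnj (b j i)) = 0" for i
    proof (cases "i \<in> {1..NN}")
      case True then show ?thesis using x expand by metis
    next
      case False
      then have "ac i = 0" using a_supp by (simp add: supp_vec_def ac_def)
      moreover have "\<forall>j\<in>{1..n}. b j i = 0" using supp_b False by (simp add: supp_vec_def)
      ultimately show ?thesis by simp
    qed
    define F where "F l = (if l = \<alpha>' then (\<lambda>i. x 1 * ac i) else if l \<in> UU
        then (\<lambda>i. \<Sum>j=1..n. x (j+1) * fb j l i)
        else (\<lambda>i. \<Sum>j=1..n. x (j+n+1) * cnj (fb j (cnj l) i)))" for l
    define S where "S = insert \<alpha>' (UU \<union> cnj ` UU)"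
    have Fgen: "F l \<in> gen_eigenspace NN AA l" if l: "l \<in> S" for l
    proof -
      consider "l = \<alpha>'" | "l \<in> UU" | u where "u \<in> UU" "l = cnj u" using l S_def by auto
      then show ?thesis
      proof cases
        case 1 then show ?thesis using ac_gen by (simp add: F_def gen_scale \<alpha>'_def)
      next
        case 2
        have "(\<lambda>i. x (j+1) * fb j l i) \<in> gen_eigenspace NN AA l" if "j \<in> {1..n}" for j
          using fb_gen[OF that 2] by (rule gen_scale)
        then show ?thesis using a1 2 by (auto simp: F_def intro!: gen_sum)
      next
        case 3
        then have "l \<noteq> \<alpha>'" "l \<notin> UU" using a2 a3 by auto
        moreover have "(\<lambda>i. cnj (fb j u i)) \<in> gen_eigenspace NN AA l" if "j \<in> {1..n}" for j
          using gen_cnj[OF _ fb_gen[OF that 3(1)]] AA_real 3(2) by blast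
        ultimately show ?thesis using 3 by (auto simp: F_def intro!: gen_sum gen_scale)
      qed
    qed
    have Fsum: "(\<lambda>i. \<Sum>l\<in>S. F l i) = (\<lambda>_. 0)"
    proof
      fix i
      have s1: "(\<Sum>l\<in>S. F l i) = F \<alpha>' i + (\<Sum>l\<in>UU. F l i) + (\<Sum>l\<in>cnj ` UU. F l i)"
        unfolding S_def using a1 a2 a3 fin by (simp add: sum.union_disjoint add.assoc)
      have s2: "(\<Sum>l\<in>UU. F l i) = (\<Sum>j=1..n. x (j+1) * b j i)"
      proof -
        have "(\<Sum>l\<in>UU. F l i) = (\<Sum>l\<in>UU. \<Sum>j=1..n. x (j+1) * fb j l i)"
          using a1 by (intro sum.cong) (auto simp: F_def)
        also have "\<dots> = (\<Sum>j=1..n. \<Sum>l\<in>UU. x (j+1) * fb j l i)" by (rule sum.swap)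
        also have "\<dots> = (\<Sum>j=1..n. x (j+1) * b j i)"
          by (intro sum.cong) (auto simp: b_eq sum_distrib_left)
        finally show ?thesis .
      qed
      have s3: "(\<Sum>l\<in>cnj ` UU. F l i) = (\<Sum>j=1..n. x (j+n+1) * cnj (b j i))"
      proof -
        have "(\<Sum>l\<in>cnj ` UU. F l i) = (\<Sum>u\<in>UU. F (cnj u) i)"
          by (simp add: sum.reindex inj_on_def)
        also have "\<dots> = (\<Sum>u\<in>UU. \<Sum>j=1..n. x (j+n+1) * cnj (fb j u i))"
        proof (rule sum.cong[OF HOL.refl])
          fix u assume u: "u \<in> UU"
          then have "cnj u \<noteq> \<alpha>'" "cnj u \<notin> UU" using a2 a3 by auto
          then show "F (cnj u) i = (\<Sum>j=1..n. x (j+n+1) * cnj (fb j u i))" by (simp add: F_def)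
        qed
        also have "\<dots> = (\<Sum>j=1..n. \<Sum>u\<in>UU. x (j+n+1) * cnj (fb j u i))" by (rule sum.swap)
        also have "\<dots> = (\<Sum>j=1..n. x (j+n+1) * cnj (b j i))"
          by (intro sum.cong) (auto simp: b_eq sum_distrib_left)
        finally show ?thesis .
      qed
      show "(\<Sum>l\<in>S. F l i) = 0"
        using s1 s2 s3 tot[of i] by (simp add: F_def)
    qed
    have F0: "\<forall>l\<in>S. F l = (\<lambda>_. 0)"
      by (rule gen_indep[OF _ Fgen Fsum]) (simp add: S_def fin)
    have x1: "x 1 = 0"
    proof -
      obtain i where "a i \<noteq> 0" using a_nz by auto
      moreover have "x 1 * ac i = 0" using F0 unfolding S_def F_def by (metis insertI1)
      ultimately show ?thesis by (simp add: ac_def)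
    qed
    have x2: "\<forall>j\<in>{1..n}. x (j+1) = 0"
    proof (rule bi)
      show "(\<lambda>i. \<Sum>j=1..n. x (j+1) * b j i) = (\<lambda>_. 0)"
      proof
        fix i
        have "(\<Sum>j=1..n. x (j+1) * b j i) = (\<Sum>j=1..n. \<Sum>l\<in>UU. x (j+1) * fb j l i)"
          by (intro sum.cong) (auto simp: b_eq sum_distrib_left)
        also have "\<dots> = (\<Sum>l\<in>UU. \<Sum>j=1..n. x (j+1) * fb j l i)" by (rule sum.swap)
        also have "\<dots> = (\<Sum>l\<in>UU. F l i)" using a1 by (intro sum.cong) (auto simp: F_def)
        also have "\<dots> = 0" using F0 by (simp add: S_def)
        finally show "(\<Sum>j=1..n. x (j+1) * b j i) = 0" .
      qed
    qed
    have x3: "\<forall>j\<in>{1..n}. cnj (x (j+n+1)) = 0"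
    proof (rule bi)
      show "(\<lambda>i. \<Sum>j=1..n. cnj (x (j+n+1)) * b j i) = (\<lambda>_. 0)"
      proof
        fix i
        have "(\<Sum>j=1..n. cnj (x (j+n+1)) * b j i) = (\<Sum>j=1..n. \<Sum>l\<in>UU. cnj (x (j+n+1)) * fb j l i)"
          by (intro sum.cong) (auto simp: b_eq sum_distrib_left)
        also have "\<dots> = (\<Sum>l\<in>UU. \<Sum>j=1..n. cnj (x (j+n+1)) * fb j l i)" by (rule sum.swap)
        also have "\<dots> = (\<Sum>l\<in>UU. cnj (F (cnj l) i))"
        proof (rule sum.cong[OF HOL.refl])
          fix u assume u: "u \<in> UU"
          then have "cnj u \<noteq> \<alpha>'" "cnj u \<notin> UU" using a2 a3 by auto
          then show "(\<Sum>j=1..n. cnj (x (j+n+1)) * fb j u i) = cnj (F (cnj u) i)" by (simp add: F_def)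
        qed
        also have "\<dots> = 0" using F0 by (simp add: S_def)
        finally show "(\<Sum>j=1..n. cnj (x (j+n+1)) * b j i) = 0" .
      qed
    qed
    show ?thesis
    proof
      fix k assume k: "k \<in> {1..NN}"
      consider "k = 1" | "k \<ge> 2 \<and> k \<le> n+1" | "k \<ge> n+2" using k by fastforce
      then show "x k = 0"
      proof cases
        case 1 then show ?thesis using x1 by simp
      next
        case 2 then have "k = (k-1)+1" "k-1 \<in> {1..n}" by auto
        then show ?thesis using x2 by metis
      next
        case 3 then have "k = (k-n-1)+n+1" "k-n-1 \<in> {1..n}" using k by auto
        then show ?thesis using x3 by (metis complex_cnj_zero_iff)
      qed
    qed
  qed
  have y: "\<forall>k\<in>{1..NN}. (\<Sum>i=1..NN. col k i * complex_of_real (d i)) = 0"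
  proof
    fix k assume k: "k \<in> {1..NN}"
    consider "k = 1" | "k \<ge> 2 \<and> k \<le> n+1" | "k \<ge> n+2" using k by fastforce
    then show "(\<Sum>i=1..NN. col k i * complex_of_real (d i)) = 0"
    proof cases
      case 1
      have "(\<Sum>i=1..NN. col k i * complex_of_real (d i)) = complex_of_real (\<Sum>i=1..NN. d i * a i)"
        using 1 by (simp add: col_def ac_def mult.commute)
      then show ?thesis by (simp only: da of_real_0)
    next
      case 2
      then have "(\<Sum>i=1..NN. col k i * complex_of_real (d i)) = (\<Sum>i=1..NN. complex_of_real (d i) * b (k-1) i)"
        by (simp add: col_def mult.commute)
      moreover have "k - 1 \<in> {1..n}" using 2 by auto
      ultimately show ?thesis using db by simp
    next
      case 3
      then have "(\<Sum>i=1..NN. col k i * complex_of_real (d i)) = cnj (\<Sum>i=1..NN. complex_of_real (d i) * b (k-n-1) i)"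
        by (simp add: col_def mult.commute)
      moreover have "k - n - 1 \<in> {1..n}" using 3 k by auto
      then have "(\<Sum>i=1..NN. complex_of_real (d i) * b (k-n-1) i) = 0" using db by blast
      ultimately show ?thesis by (simp only: complex_cnj_zero)
    qed
  qed
  have "\<forall>i\<in>{1..NN}. complex_of_real (d i) = 0"
  proof (rule rank1[where G="\<lambda>i k. col k i"])
    fix x assume "\<forall>i\<in>{1..NN}. (\<Sum>j=1..NN. col j i * x j) = 0"
    then show "\<forall>j\<in>{1..NN}. x j = 0" by (rule inj)
  next
    show "\<forall>j\<in>{1..NN}. (\<Sum>i=1..NN. col j i * complex_of_real (d i)) = 0" by (rule y)
  qed
  then show ?thesis by simp
qed

end

definition sgn1 :: "bool \<Rightarrow> int" where "sgn1 e = (if e then -1 else 1)"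

fun vecw :: "nat word \<Rightarrow> nat \<Rightarrow> int" where
  "vecw [] = (\<lambda>_. 0)"
| "vecw ((i,e) # w) = (vecw w)(i := vecw w i + sgn1 e)"

lemma gpA: "m \<ge> 0 \<Longrightarrow> gen_power i (m+1) = (i,False) # gen_power i m"
proof -
  assume m: "m \<ge> 0"
  then have "nat \<bar>m+1\<bar> = Suc (nat \<bar>m\<bar>)" by (simp add: nat_add_distrib)
  then show ?thesis using m by (simp add: gen_power_def)
qed

lemma gpB: "m < 0 \<Longrightarrow> gen_power i m = (i,True) # gen_power i (m+1)"
proof -
  assume m: "m < 0"
  then have "nat \<bar>m\<bar> = Suc (nat \<bar>m+1\<bar>)" by linarith
  moreover have "replicate (nat \<bar>m+1\<bar>) (i, m + 1 < 0) = replicate (nat \<bar>m+1\<bar>) (i, True)"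
    using m by (cases "m + 1 < 0") auto
  ultimately show ?thesis using m by (simp add: gen_power_def)
qed

lemma gp0: "gen_power i 0 = []" by (simp add: gen_power_def)

lemma gp_fst: "set (map fst (gen_power j m)) \<subseteq> {j}"
  by (auto simp: gen_power_def)

lemma concat_fst: assumes h: "(\<And>j. j \<in> set js \<Longrightarrow> set (map fst (f j)) \<subseteq> {j})"
  shows "set (map fst (concat (map f js))) \<subseteq> set js"
proof
  fix y assume "y \<in> set (map fst (concat (map f js)))"
  then obtain x where x: "x \<in> set (concat (map f js))" "y = fst x" by auto
  then obtain j where j: "j \<in> set js" "x \<in> set (f j)" by auto
  then have "fst x \<in> set (map fst (f j))" by auto
  with h[OF j(1)] have "fst x = j" by blast
  then show "y \<in> set js" using x j by simp
qed

lemma vecw_append: "vecw (u @ v) = (\<lambda>j. vecw u j + vecw v j)"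
  by (induction u rule: vecw.induct) (auto simp: fun_eq_iff)

lemma vecw_rep: "vecw (replicate k (i,e)) = (\<lambda>j. if j = i then sgn1 e * int k else 0)"
  by (induction k) (auto simp: fun_eq_iff algebra_simps)

lemma vecw_gp: "vecw (gen_power i m) = (\<lambda>j. if j = i then m else 0)"
  by (auto simp: gen_power_def vecw_rep sgn1_def fun_eq_iff)

lemma vecw_concat: "vecw (concat (map f js)) j = sum_list (map (\<lambda>x. vecw (f x) j) js)"
  by (induction js) (auto simp: vecw_append)

locale wctx = fixes N :: nat and M :: "nat \<Rightarrow> nat \<Rightarrow> int"
begin

abbreviation "RR \<equiv> GM_relations N M"
abbreviation "WE \<equiv> word_equiv RR"

definition T :: "(nat \<Rightarrow> int) \<Rightarrow> nat word" where
  "T c = concat (map (\<lambda>j. gen_power j (c j)) [1..<N+1])"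

definition MT :: "(nat \<Rightarrow> int) \<Rightarrow> nat \<Rightarrow> int" where
  "MT c = (\<lambda>j. \<Sum>i=1..N. c i * M i j)"

definition NF :: "nat \<Rightarrow> (nat \<Rightarrow> int) \<Rightarrow> nat \<Rightarrow> nat word" where
  "NF p c q = replicate p (0,True) @ T c @ replicate q (0,False)"

lemma WE_refl: "WE u u" by (rule word_equiv.refl)
lemma WE_sym: "WE u v \<Longrightarrow> WE v u" by (rule word_equiv.sym)
lemma WE_trans [trans]: "WE u v \<Longrightarrow> WE v w \<Longrightarrow> WE u w" by (rule word_equiv.trans)

lemma WE_cong: "WE u v \<Longrightarrow> WE (x @ u @ y) (x @ v @ y)"
proof (induction rule: word_equiv.induct)
  case (refl w) show ?case by (rule word_equiv.refl)
next
  case (sym u v) then show ?case by (blast intro: word_equiv.sym)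
next
  case (trans u v w) then show ?case by (blast intro: word_equiv.trans)
next
  case (cancel u i e v)
  have "WE ((x @ u) @ [(i,e),(i,\<not>e)] @ (v @ y)) ((x @ u) @ (v @ y))" by (rule word_equiv.cancel)
  then show ?case by simp
next
  case (rel l r u v)
  have "WE ((x @ u) @ l @ (v @ y)) ((x @ u) @ r @ (v @ y))" using rel.hyps by (rule word_equiv.rel)
  then show ?case by simp
qed

lemma WE_congL: "WE u v \<Longrightarrow> WE (x @ u) (x @ v)"
  using WE_cong[of u v x "[]"] by simp

lemma WE_congR: "WE u v \<Longrightarrow> WE (u @ y) (v @ y)"
  using WE_cong[of u v "[]" y] by simp

lemma WE_cons: "WE u v \<Longrightarrow> WE (l # u) (l # v)"
  using WE_congL[of u v "[l]"] by simp

lemma WE_app: "WE u u' \<Longrightarrow> WE v v' \<Longrightarrow> WE (u @ v) (u' @ v')"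
  by (meson WE_congL WE_congR WE_trans)

lemma WE_cancelTF: "WE (u @ (i,True) # (i,False) # v) (u @ v)"
  using word_equiv.cancel[of RR u i True v] by simp

lemma WE_cancelFT: "WE (u @ (i,False) # (i,True) # v) (u @ v)"
  using word_equiv.cancel[of RR u i False v] by simp

lemma WE_rel: "(l, r) \<in> RR \<Longrightarrow> WE (u @ l @ v) (u @ r @ v)"
  by (rule word_equiv.rel)

lemma rel_comm: "i \<in> {1..N} \<Longrightarrow> j \<in> {1..N} \<Longrightarrow> ([(i,False),(j,False)], [(j,False),(i,False)]) \<in> RR"
  by (auto simp: GM_relations_def)

lemma rel_conj: "i \<in> {1..N} \<Longrightarrow> ([(0,False),(i,False),(0,True)], T (\<lambda>j. M i j)) \<in> RR"
  by (auto simp: GM_relations_def T_def)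

lemma comm_FF: "i \<in> {1..N} \<Longrightarrow> j \<in> {1..N} \<Longrightarrow> WE [(i,False),(j,False)] [(j,False),(i,False)]"
  using WE_rel[OF rel_comm, of i j "[]" "[]"] by simp

lemma comm_TF: assumes "i \<in> {1..N}" "j \<in> {1..N}"
  shows "WE [(i,True),(j,False)] [(j,False),(i,True)]"
proof -
  have s1: "WE [(i,True),(j,False)] [(i,True),(j,False),(i,False),(i,True)]"
    using WE_cancelFT[of "[(i,True),(j,False)]" i "[]"] by (simp add: WE_sym)
  have s2: "WE [(i,True),(j,False),(i,False),(i,True)] [(i,True),(i,False),(j,False),(i,True)]"
    using WE_rel[OF rel_comm[OF assms(2,1)], of "[(i,True)]" "[(i,True)]"] by simp
  have s3: "WE [(i,True),(i,False),(j,False),(i,True)] [(j,False),(i,True)]"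
    using WE_cancelTF[of "[]" i "[(j,False),(i,True)]"] by simp
  show ?thesis using s1 s2 s3 WE_trans by blast
qed

lemma comm_FT: assumes "i \<in> {1..N}" "j \<in> {1..N}"
  shows "WE [(i,False),(j,True)] [(j,True),(i,False)]"
  using comm_TF[OF assms(2,1)] WE_sym by blast

lemma comm_TT: assumes "i \<in> {1..N}" "j \<in> {1..N}"
  shows "WE [(i,True),(j,True)] [(j,True),(i,True)]"
proof -
  have s1: "WE [(i,True),(j,True)] [(j,True),(j,False),(i,True),(j,True)]"
    using WE_cancelTF[of "[]" j "[(i,True),(j,True)]"] by (simp add: WE_sym)
  have s2: "WE [(j,True),(j,False),(i,True),(j,True)] [(j,True),(i,True),(j,False),(j,True)]"
    using WE_cong[OF comm_FT[OF assms(2,1)], of "[(j,True)]" "[(j,True)]"] by simp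
  have s3: "WE [(j,True),(i,True),(j,False),(j,True)] [(j,True),(i,True)]"
    using WE_cancelFT[of "[(j,True),(i,True)]" j "[]"] by simp
  show ?thesis using s1 s2 s3 WE_trans by blast
qed

lemma comm: "i \<in> {1..N} \<Longrightarrow> j \<in> {1..N} \<Longrightarrow> WE [(i,e),(j,e')] [(j,e'),(i,e)]"
  by (cases e; cases e') (auto intro: comm_FF comm_TF comm_FT comm_TT)

lemma comm_word: "i \<in> {1..N} \<Longrightarrow> set (map fst P) \<subseteq> {1..N} \<Longrightarrow> WE ((i,e) # P) (P @ [(i,e)])"
proof (induction P)
  case Nil then show ?case by (simp add: WE_refl)
next
  case (Cons l P)
  obtain j e' where l: "l = (j,e')" by (cases l)
  have j: "j \<in> {1..N}" using Cons.prems l by auto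
  have "WE ((i,e) # l # P) (l # (i,e) # P)"
    using WE_congR[OF comm[OF Cons.prems(1) j, of e e'], of P] l by simp
  moreover have "WE (l # (i,e) # P) (l # (P @ [(i,e)]))"
    using WE_cons Cons by auto
  ultimately show ?case using WE_trans by auto
qed

lemma gp_step: "WE ((i,e) # gen_power i m) (gen_power i (m + sgn1 e))"
proof (cases e)
  case False
  show ?thesis
  proof (cases "m \<ge> 0")
    case True then show ?thesis using False by (simp add: sgn1_def gpA WE_refl)
  next
    case F2: False
    then have "gen_power i m = (i,True) # gen_power i (m+1)" by (simp add: gpB)
    then show ?thesis using False WE_cancelFT[of "[]" i "gen_power i (m+1)"] by (simp add: sgn1_def)
  qed
next
  case True
  show ?thesis
  proof (cases "m > 0")
    case T2: True
    then have "gen_power i m = (i,False) # gen_power i (m-1)" using gpA[of "m-1" i] by simp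
    then show ?thesis using True WE_cancelTF[of "[]" i "gen_power i (m-1)"] by (simp add: sgn1_def)
  next
    case False
    then have "gen_power i (m-1) = (i,True) # gen_power i m" using gpB[of "m-1" i] by simp
    then show ?thesis using True by (simp add: sgn1_def WE_refl)
  qed
qed

lemma T_cong: "(\<And>j. j \<in> {1..N} \<Longrightarrow> c j = c' j) \<Longrightarrow> T c = T c'"
  unfolding T_def by (intro arg_cong[where f=concat] map_cong) auto

lemma T_split: "i \<in> {1..N} \<Longrightarrow> T c = concat (map (\<lambda>j. gen_power j (c j)) [1..<i]) @ gen_power i (c i)
    @ concat (map (\<lambda>j. gen_power j (c j)) [i+1..<N+1])"
proof -
  assume i: "i \<in> {1..N}"
  then have "[1..<N+1] = [1..<i] @ [i..<N+1]" using upt_add_eq_append[of 1 i "N+1-i"] by simp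
  moreover have "[i..<N+1] = i # [i+1..<N+1]" using i by (auto intro: upt_conv_Cons)
  ultimately show ?thesis by (simp add: T_def)
qed

lemma T_fst: "set (map fst (T c)) \<subseteq> {1..N}"
proof -
  have "set (map fst (T c)) \<subseteq> set [1..<N+1]"
    unfolding T_def by (rule concat_fst) (rule gp_fst)
  then show ?thesis by auto
qed

lemma TL: assumes i: "i \<in> {1..N}"
  shows "WE ((i,e) # T c) (T (c(i := c i + sgn1 e)))"
proof -
  define P where "P = concat (map (\<lambda>j. gen_power j (c j)) [1..<i])"
  define Q where "Q = concat (map (\<lambda>j. gen_power j (c j)) [i+1..<N+1])"
  have Tc: "T c = P @ gen_power i (c i) @ Q" unfolding P_def Q_def by (rule T_split[OF i])
  have P': "concat (map (\<lambda>j. gen_power j ((c(i := c i + sgn1 e)) j)) [1..<i]) = P"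
    unfolding P_def by (intro arg_cong[where f=concat] map_cong) auto
  have Q': "concat (map (\<lambda>j. gen_power j ((c(i := c i + sgn1 e)) j)) [i+1..<N+1]) = Q"
    unfolding Q_def by (intro arg_cong[where f=concat] map_cong) auto
  have Tc': "T (c(i := c i + sgn1 e)) = P @ gen_power i (c i + sgn1 e) @ Q"
    using T_split[OF i, of "c(i := c i + sgn1 e)"] P' Q' by simp
  have Pf: "set (map fst P) \<subseteq> {1..N}"
  proof -
    have "set (map fst P) \<subseteq> set [1..<i]" unfolding P_def by (rule concat_fst) (rule gp_fst)
    then show ?thesis using i by auto
  qed
  have "WE ((i,e) # T c) (P @ ((i,e) # gen_power i (c i)) @ Q)"
    using WE_congR[OF comm_word[OF i Pf, of e], of "gen_power i (c i) @ Q"] Tc by simp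
  moreover have "WE (P @ ((i,e) # gen_power i (c i)) @ Q) (P @ gen_power i (c i + sgn1 e) @ Q)"
    by (rule WE_cong[OF gp_step])
  ultimately show ?thesis using Tc' WE_trans by auto
qed

lemma T0: "T (\<lambda>_. 0) = []"
  by (simp add: T_def gp0)

lemma TW: "set (map fst w) \<subseteq> {1..N} \<Longrightarrow> WE (w @ T c) (T (\<lambda>j. c j + vecw w j))"
proof (induction w arbitrary: c)
  case Nil then show ?case by (simp add: WE_refl)
next
  case (Cons l w)
  obtain i e where l: "l = (i,e)" by (cases l)
  have i: "i \<in> {1..N}" using Cons.prems l by auto
  have "WE (l # w @ T c) (l # T (\<lambda>j. c j + vecw w j))" using Cons by (auto intro: WE_cons)
  moreover have "WE (l # T (\<lambda>j. c j + vecw w j)) (T ((\<lambda>j. c j + vecw w j)(i := c i + vecw w i + sgn1 e)))"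
    using TL[OF i, of e "\<lambda>j. c j + vecw w j"] l by simp
  moreover have "(\<lambda>j. c j + vecw w j)(i := c i + vecw w i + sgn1 e) = (\<lambda>j. c j + vecw (l # w) j)"
    using l by (auto simp: fun_eq_iff)
  ultimately show ?case using WE_trans by auto
qed

lemma vecw_T: "j \<in> {1..N} \<Longrightarrow> vecw (T c) j = c j"
proof -
  assume j: "j \<in> {1..N}"
  have "vecw (T c) j = sum_list (map (\<lambda>x. if j = x then c x else 0) [1..<N+1])"
    unfolding T_def vecw_concat by (simp add: vecw_gp)
  also have "\<dots> = (\<Sum>x\<in>{1..<N+1}. if j = x then c x else 0)"
    by (simp add: sum_set_upt_conv_sum_list_nat[symmetric])
  also have "\<dots> = c j" using j by simp
  finally show ?thesis .
qed

lemma T_app: "WE (T c @ T c') (T (\<lambda>j. c j + c' j))"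
proof -
  have "WE (T c @ T c') (T (\<lambda>j. c' j + vecw (T c) j))" by (rule TW[OF T_fst])
  moreover have "T (\<lambda>j. c' j + vecw (T c) j) = T (\<lambda>j. c j + c' j)"
    by (rule T_cong) (simp add: vecw_T)
  ultimately show ?thesis by simp
qed

lemma T_ev: assumes i: "i \<in> {1..N}" shows "T (\<lambda>j. if j = i then sgn1 e else 0) = [(i,e)]"
proof -
  define ev where "ev = (\<lambda>j. if j = i then sgn1 e else 0)"
  have P: "concat (map (\<lambda>j. gen_power j (ev j)) [1..<i]) = []" by (auto simp: ev_def gp0)
  have Q: "concat (map (\<lambda>j. gen_power j (ev j)) [i+1..<N+1]) = []" by (auto simp: ev_def gp0)
  have G: "gen_power i (ev i) = [(i,e)]" by (cases e) (simp_all add: ev_def gen_power_def sgn1_def)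
  have "T ev = [(i,e)]" using T_split[OF i, of ev, unfolded P Q G] by simp
  then show ?thesis unfolding ev_def .
qed

lemma CF: assumes i: "i \<in> {1..N}"
  shows "WE [(0,False),(i,False)] (T (\<lambda>j. M i j) @ [(0,False)])"
proof -
  have "WE [(0,False),(i,False)] [(0,False),(i,False),(0,True),(0,False)]"
    using WE_cancelTF[of "[(0,False),(i,False)]" 0 "[]"] by (simp add: WE_sym)
  moreover have "WE [(0,False),(i,False),(0,True),(0,False)] (T (\<lambda>j. M i j) @ [(0,False)])"
    using WE_rel[OF rel_conj[OF i], of "[]" "[(0,False)]"] by simp
  ultimately show ?thesis using WE_trans by blast
qed

lemma CT: assumes i: "i \<in> {1..N}"
  shows "WE [(0,False),(i,True)] (T (\<lambda>j. - M i j) @ [(0,False)])"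
proof -
  have z: "WE (T (\<lambda>j. - M i j) @ T (\<lambda>j. M i j)) []"
    using T_app[of "\<lambda>j. - M i j" "\<lambda>j. M i j"] by (simp add: T0)
  have s1: "WE [(0,False),(i,True)] (T (\<lambda>j. - M i j) @ T (\<lambda>j. M i j) @ [(0,False),(i,True)])"
    using WE_congR[OF WE_sym[OF z], of "[(0,False),(i,True)]"] by simp
  have s2: "WE (T (\<lambda>j. - M i j) @ T (\<lambda>j. M i j) @ [(0,False),(i,True)])
       (T (\<lambda>j. - M i j) @ [(0,False),(i,False),(0,True)] @ [(0,False),(i,True)])"
    using WE_sym[OF WE_rel[OF rel_conj[OF i], of "T (\<lambda>j. - M i j)" "[(0,False),(i,True)]"]] by simp
  have s3: "WE (T (\<lambda>j. - M i j) @ [(0,False),(i,False),(0,True)] @ [(0,False),(i,True)])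
       (T (\<lambda>j. - M i j) @ [(0,False),(i,False),(i,True)])"
    using WE_cancelTF[of "T (\<lambda>j. - M i j) @ [(0,False),(i,False)]" 0 "[(i,True)]"] by simp
  have s4: "WE (T (\<lambda>j. - M i j) @ [(0,False),(i,False),(i,True)]) (T (\<lambda>j. - M i j) @ [(0,False)])"
    using WE_cancelFT[of "T (\<lambda>j. - M i j) @ [(0,False)]" i "[]"] by simp
  show ?thesis using s1 s2 s3 s4 WE_trans by blast
qed

lemma C_letter: "i \<in> {1..N} \<Longrightarrow> WE [(0,False),(i,e)] (T (\<lambda>j. sgn1 e * M i j) @ [(0,False)])"
  by (cases e) (auto simp: sgn1_def intro: CF CT)

lemma MT_upd: "i \<in> {1..N} \<Longrightarrow> MT (v(i := v i + s)) j = MT v j + s * M i j"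
proof -
  assume i: "i \<in> {1..N}"
  have "MT (v(i := v i + s)) j = (\<Sum>k=1..N. v k * M k j + (if k = i then s * M i j else 0))"
    unfolding MT_def by (intro sum.cong) (auto simp: algebra_simps)
  also have "\<dots> = MT v j + s * M i j" using i by (simp add: sum.distrib MT_def)
  finally show ?thesis .
qed

lemma CG: "set (map fst w) \<subseteq> {1..N} \<Longrightarrow> WE ((0,False) # w) (T (MT (vecw w)) @ [(0,False)])"
proof (induction w)
  case Nil
  have "MT (vecw []) = (\<lambda>_. 0)" by (simp add: MT_def)
  then show ?case by (simp add: T0 WE_refl)
next
  case (Cons l w)
  obtain i e where l: "l = (i,e)" by (cases l)
  have i: "i \<in> {1..N}" using Cons.prems l by auto
  have A: "WE ((0,False) # l # w) (T (\<lambda>j. sgn1 e * M i j) @ [(0,False)] @ w)"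
    using WE_congR[OF C_letter[OF i, of e], of w] l by simp
  have B: "WE (T (\<lambda>j. sgn1 e * M i j) @ [(0,False)] @ w)
      (T (\<lambda>j. sgn1 e * M i j) @ T (MT (vecw w)) @ [(0,False)])"
    using WE_congL[of "(0,False) # w"] Cons by auto
  have C: "WE (T (\<lambda>j. sgn1 e * M i j) @ T (MT (vecw w)) @ [(0,False)])
      (T (\<lambda>j. sgn1 e * M i j + MT (vecw w) j) @ [(0,False)])"
    using WE_congR[OF T_app] by simp
  have D: "T (\<lambda>j. sgn1 e * M i j + MT (vecw w) j) = T (MT (vecw (l # w)))"
    using l MT_upd[OF i] by (intro T_cong) (simp add: algebra_simps)
  show ?case using WE_trans[OF WE_trans[OF A B] C] unfolding D .
qed

lemma MT_cong: "(\<And>j. j \<in> {1..N} \<Longrightarrow> c j = c' j) \<Longrightarrow> MT c = MT c'"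
  unfolding MT_def by (intro ext sum.cong) auto

lemma CT': "WE ((0,False) # T c) (T (MT c) @ [(0,False)])"
proof -
  have "MT (vecw (T c)) = MT c" by (rule MT_cong) (simp add: vecw_T)
  then show ?thesis using CG[OF T_fst, of c] by simp
qed

lemma CI: "WE (T c @ [(0,True)]) ((0,True) # T (MT c))"
proof -
  have s1: "WE (T c @ [(0,True)]) ((0,True) # (0,False) # T c @ [(0,True)])"
    using WE_cancelTF[of "[]" 0 "T c @ [(0,True)]"] by (simp add: WE_sym)
  have s2: "WE ((0,True) # (0,False) # T c @ [(0,True)]) ((0,True) # T (MT c) @ [(0,False)] @ [(0,True)])"
    using WE_cong[OF CT'[of c], of "[(0,True)]" "[(0,True)]"] by simp
  have s3: "WE ((0,True) # T (MT c) @ [(0,False)] @ [(0,True)]) ((0,True) # T (MT c))"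
    using WE_cancelFT[of "(0,True) # T (MT c)" 0 "[]"] by simp
  show ?thesis using s1 s2 s3 WE_trans by blast
qed

lemma CIp: "WE (T c @ replicate p (0,True)) (replicate p (0,True) @ T ((MT ^^ p) c))"
proof (induction p arbitrary: c)
  case 0 then show ?case by (simp add: WE_refl)
next
  case (Suc p)
  have A: "WE (T c @ replicate (Suc p) (0,True)) (((0,True) # T (MT c)) @ replicate p (0,True))"
    using WE_congR[OF CI, of c "replicate p (0,True)"] by simp
  have B: "WE (((0,True) # T (MT c)) @ replicate p (0,True))
       ((0,True) # replicate p (0,True) @ T ((MT ^^ p) (MT c)))"
    using WE_cons[OF Suc.IH[of "MT c"]] by simp
  have C: "(MT ^^ p) (MT c) = (MT ^^ Suc p) c" by (simp only: funpow_Suc_right o_apply)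
  have D: "(0,True) # replicate p (0,True) @ T ((MT ^^ p) (MT c))
      = replicate (Suc p) (0::nat,True) @ T ((MT ^^ Suc p) c)" using C by simp
  have "WE (T c @ replicate (Suc p) (0,True)) ((0,True) # replicate p (0,True) @ T ((MT ^^ p) (MT c)))"
    by (rule WE_trans[OF A B])
  then show ?case by (simp only: D)
qed

lemma CFp: "WE (replicate d (0,False) @ T c) (T ((MT ^^ d) c) @ replicate d (0,False))"
proof (induction d arbitrary: c)
  case 0 then show ?case by (simp add: WE_refl)
next
  case (Suc d)
  have "WE ((0,False) # replicate d (0,False) @ T c) ((0,False) # T ((MT ^^ d) c) @ replicate d (0,False))"
    using WE_cons[OF Suc.IH] by simp
  moreover have "WE ((0,False) # T ((MT ^^ d) c) @ replicate d (0,False))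
     (T (MT ((MT ^^ d) c)) @ [(0,False)] @ replicate d (0,False))"
    using WE_congR[OF CT', of "(MT ^^ d) c" "replicate d (0,False)"] by simp
  ultimately show ?case using WE_trans by fastforce
qed

lemma norm: "set (map fst u) \<subseteq> {0..N} \<Longrightarrow> \<exists>p c q. WE u (NF p c q)"
proof (induction u)
  case Nil
  have "NF 0 (\<lambda>_. 0) 0 = []" by (simp add: NF_def T0)
  then have "WE [] (NF 0 (\<lambda>_. 0) 0)" by (simp add: WE_refl)
  then show ?case by blast
next
  case (Cons l u)
  obtain i e where l: "l = (i,e)" by (cases l)
  from Cons obtain p c q where pcq: "WE u (NF p c q)" by auto
  then have lu: "WE (l # u) (l # NF p c q)" by (rule WE_cons)
  show ?case
  proof (cases "i = 0")
    case True
    show ?thesis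
    proof (cases e)
      case True
      then have "l # NF p c q = NF (Suc p) c q" using l \<open>i = 0\<close> by (simp add: NF_def)
      then show ?thesis using lu by auto
    next
      case False
      show ?thesis
      proof (cases p)
        case (Suc p')
        have "WE (l # NF p c q) (NF p' c q)"
          using WE_cancelFT[of "[]" 0 "NF p' c q"] l \<open>i = 0\<close> False Suc by (simp add: NF_def)
        then show ?thesis using WE_trans[OF lu] by blast
      next
        case 0
        have "WE (((0,False) # T c) @ replicate q (0,False)) ((T (MT c) @ [(0,False)]) @ replicate q (0,False))"
          by (rule WE_congR[OF CT'])
        then have "WE (l # NF p c q) (NF 0 (MT c) (Suc q))"
          using l \<open>i = 0\<close> False 0 by (simp add: NF_def)
        then show ?thesis using WE_trans[OF lu] by blast
      qed
    qed
  next
    case False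
    then have i: "i \<in> {1..N}" using Cons.prems l by auto
    define ev where "ev = (\<lambda>j. if j = i then sgn1 e else 0)"
    have E: "l # NF p c q = (T ev @ replicate p (0,True)) @ T c @ replicate q (0,False)"
      using T_ev[OF i, of e] l by (simp add: NF_def ev_def)
    have A: "WE ((T ev @ replicate p (0,True)) @ T c @ replicate q (0,False))
        ((replicate p (0,True) @ T ((MT ^^ p) ev)) @ T c @ replicate q (0,False))"
      by (rule WE_congR[OF CIp])
    have B: "WE ((replicate p (0,True) @ T ((MT ^^ p) ev)) @ T c @ replicate q (0,False))
        (replicate p (0,True) @ T (\<lambda>j. (MT ^^ p) ev j + c j) @ replicate q (0,False))"
      using WE_cong[OF T_app, of "replicate p (0,True)" "(MT ^^ p) ev" c "replicate q (0,False)"] by simp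
    have "WE (l # NF p c q) (NF p (\<lambda>j. (MT ^^ p) ev j + c j) q)"
      unfolding E using WE_trans[OF A B] by (simp add: NF_def)
    then have "WE (l # u) (NF p (\<lambda>j. (MT ^^ p) ev j + c j) q)" by (rule WE_trans[OF lu])
    then show ?thesis by blast
  qed
qed

lemma rep_cancel: "WE (replicate d (0,True) @ replicate d (0,False)) []"
proof (induction d)
  case 0 then show ?case by (simp add: WE_refl)
next
  case (Suc d)
  have c: "WE (replicate d (0,True) @ (0,True) # (0,False) # replicate d (0,False))
      (replicate d (0,True) @ replicate d (0::nat,False))" by (rule WE_cancelTF)
  have e: "replicate (Suc d) (0::nat,True) @ replicate (Suc d) (0,False)
      = replicate d (0,True) @ (0,True) # (0,False) # replicate d (0,False)" by (simp add: replicate_append_same)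
  show ?case unfolding e using WE_trans[OF c Suc.IH] .
qed

lemma shift: "WE (NF p c q) (NF (p + d) ((MT ^^ d) c) (d + q))"
proof -
  have "WE (T c) ((replicate d (0,True) @ replicate d (0,False)) @ T c)"
    using WE_congR[OF WE_sym[OF rep_cancel], of "T c" d] by simp
  also have "WE ((replicate d (0,True) @ replicate d (0,False)) @ T c)
      (replicate d (0,True) @ T ((MT ^^ d) c) @ replicate d (0,False))"
    using WE_congL[OF CFp, of "replicate d (0,True)"] by simp
  finally have "WE (T c) (replicate d (0,True) @ T ((MT ^^ d) c) @ replicate d (0,False))" .
  then have "WE (replicate p (0,True) @ T c @ replicate q (0,False))
     (replicate p (0,True) @ (replicate d (0,True) @ T ((MT ^^ d) c) @ replicate d (0,False)) @ replicate q (0,False))"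
    by (rule WE_cong)
  then show ?thesis by (simp add: NF_def replicate_add)
qed

end

sublocale GMset \<subseteq> W: wctx "2*n+1" M .

context GMset
begin

lemma R_inj: assumes c: "\<forall>l\<in>{1..n}. (\<Sum>j=1..n. R l j * c j) = 0" shows "\<forall>j\<in>{1..n}. c j = 0"
proof (rule bi)
  define v where "v = (\<lambda>i. \<Sum>j=1..n. c j * b j i)"
  have "matvec NN AA v = (\<lambda>i. \<Sum>j=1..n. matvec NN AA (\<lambda>i. c j * b j i) i)"
    unfolding v_def by (rule matvec_sum)
  also have "\<dots> = (\<lambda>i. \<Sum>j=1..n. c j * matvec NN AA (b j) i)" unfolding matvec_scale ..
  also have "\<dots> = (\<lambda>i. \<Sum>j=1..n. c j * (\<Sum>l=1..n. R l j * b l i))"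
  proof (rule ext, rule sum.cong[OF HOL.refl])
    fix i j assume j: "j \<in> {1..n}"
    have "matvec NN AA (b j) = (\<lambda>i. \<Sum>l=1..n. R l j * b l i)" using R_def j by blast
    then show "c j * matvec NN AA (b j) i = c j * (\<Sum>l=1..n. R l j * b l i)" by simp
  qed
  also have "\<dots> = (\<lambda>i. \<Sum>l=1..n. (\<Sum>j=1..n. R l j * c j) * b l i)"
  proof (rule ext)
    fix i
    have "(\<Sum>j=1..n. c j * (\<Sum>l=1..n. R l j * b l i)) = (\<Sum>j=1..n. \<Sum>l=1..n. c j * (R l j * b l i))"
      by (simp add: sum_distrib_left)
    also have "\<dots> = (\<Sum>l=1..n. \<Sum>j=1..n. c j * (R l j * b l i))" by (rule sum.swap)
    also have "\<dots> = (\<Sum>l=1..n. (\<Sum>j=1..n. R l j * c j) * b l i)"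
      by (rule sum.cong[OF HOL.refl]) (simp add: sum_distrib_left sum_distrib_right mult_ac)
    finally show "(\<Sum>j=1..n. c j * (\<Sum>l=1..n. R l j * b l i)) = (\<Sum>l=1..n. (\<Sum>j=1..n. R l j * c j) * b l i)" .
  qed
  also have "\<dots> = (\<lambda>i. 0)" using c by simp
  finally have mv: "matvec NN AA v = (\<lambda>i. 0 * v i)" by simp
  have sv: "supp_vec NN v" unfolding v_def
    by (rule supp_vec_sum) (use supp_b in \<open>auto intro: supp_vec_scale\<close>)
  show "v = (\<lambda>_. 0)"
  proof (rule ccontr)
    assume "v \<noteq> (\<lambda>_. 0)"
    then have "is_eigenvalue NN AA 0" using mv sv unfolding is_eigenvalue_def by blast
    then have "(0::complex) \<in> {l. is_eigenvalue NN AA l \<and> Im l = 0}" by simp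
    then have "(0::complex) = complex_of_real \<alpha>" using real_eig by blast
    then show False using alpha_pos by simp
  qed
qed

lemma RT_injT: "\<forall>j\<in>{1..n}. (\<Sum>l=1..n. R l j * y l) = 0 \<Longrightarrow> \<forall>l\<in>{1..n}. y l = 0"
  by (rule rank1[where G=R]) (use R_inj in blast)+

definition RT :: "(nat \<Rightarrow> complex) \<Rightarrow> nat \<Rightarrow> complex" where
  "RT z = (\<lambda>j. if j \<in> {1..n} then (\<Sum>l=1..n. R l j * z l) else 0)"

lemma RT_supp: "supp_vec n (RT z)" by (simp add: RT_def supp_vec_def)

lemma RT_zero: "RT (\<lambda>_. 0) = (\<lambda>_. 0)" unfolding RT_def by (rule ext) simp

lemma RT_add: "RT (\<lambda>j. z j + w j) = (\<lambda>j. RT z j + RT w j)"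
  by (auto simp: RT_def sum.distrib distrib_left)

lemma RT_inj: assumes z: "supp_vec n z" and z': "supp_vec n z'" and e: "RT z = RT z'" shows "z = z'"
proof -
  have "\<forall>j\<in>{1..n}. (\<Sum>l=1..n. R l j * (z l - z' l)) = 0"
  proof
    fix j assume j: "j \<in> {1..n}"
    have "RT z j = RT z' j" using e by simp
    then show "(\<Sum>l=1..n. R l j * (z l - z' l)) = 0"
      using j by (simp add: RT_def right_diff_distrib sum_subtractf)
  qed
  from RT_injT[OF this] have "\<forall>l\<in>{1..n}. z l = z' l" by simp
  then show ?thesis using z z' by (auto simp: supp_vec_def fun_eq_iff)
qed

lemma RT_surj: assumes z: "supp_vec n z" shows "\<exists>x. supp_vec n x \<and> RT x = z"
proof -
  obtain x where x: "\<forall>i\<in>{1..n}. (\<Sum>j=1..n. R j i * x j) = z i"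
    using surj1[where G="\<lambda>i j. R j i" and N=n and y=z] RT_injT by blast
  define x' where "x' = (\<lambda>l. if l \<in> {1..n} then x l else 0)"
  have "supp_vec n x'" by (simp add: x'_def supp_vec_def)
  moreover have "RT x' = z"
  proof
    fix j show "RT x' j = z j"
    proof (cases "j \<in> {1..n}")
      case True
      have "RT x' j = (\<Sum>l=1..n. R l j * x l)" using True by (simp add: RT_def x'_def)
      then show ?thesis using x True by simp
    next
      case False
      then have "RT x' j = 0" unfolding RT_def by (simp only: if_False)
      moreover have "z j = 0" using z False by (simp add: supp_vec_def)
      ultimately show ?thesis by simp
    qed
  qed
  ultimately show ?thesis by blast
qed

definition RTinv :: "(nat \<Rightarrow> complex) \<Rightarrow> nat \<Rightarrow> complex" where
  "RTinv z = (SOME x. supp_vec n x \<and> RT x = z)"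

lemma RTinv: assumes z: "supp_vec n z" shows "supp_vec n (RTinv z) \<and> RT (RTinv z) = z"
  using someI_ex[OF RT_surj[OF z]] unfolding RTinv_def .


abbreviation "SS \<equiv> HC_dom n"
abbreviation "gen \<equiv> GM_gen n \<alpha> a b R"
abbreviation "GG \<equiv> GM_group n \<alpha> a b R"
abbreviation "BG \<equiv> BijGroup (HC_dom n)"
abbreviation "HH \<equiv> generate (BijGroup (HC_dom n)) (GM_gen n \<alpha> a b R ` {0..2*n+1})"

definition act :: "nat \<times> bool \<Rightarrow> complex \<times> (nat \<Rightarrow> complex) \<Rightarrow> complex \<times> (nat \<Rightarrow> complex)" where
  "act l p = (case l of (i,e) \<Rightarrow> (case p of (w,z) \<Rightarrow>
     if i = 0 then (complex_of_real \<alpha> * w, RT z)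
     else if e then (w - complex_of_real (a i), \<lambda>j. z j - (if j \<in> {1..n} then b j i else 0))
     else (w + complex_of_real (a i), \<lambda>j. z j + (if j \<in> {1..n} then b j i else 0))))"

lemma act0: "act (0,e) (w,z) = (complex_of_real \<alpha> * w, RT z)"
  by (simp add: act_def)
lemma actT: "i \<noteq> 0 \<Longrightarrow> act (i,True) (w,z) = (w - complex_of_real (a i), \<lambda>j. z j - (if j \<in> {1..n} then b j i else 0))"
  by (simp add: act_def)
lemma actF: "i \<noteq> 0 \<Longrightarrow> act (i,False) (w,z) = (w + complex_of_real (a i), \<lambda>j. z j + (if j \<in> {1..n} then b j i else 0))"
  by (simp add: act_def)

lemma HC_mem: "(w,z) \<in> SS \<longleftrightarrow> Im w > 0 \<and> supp_vec n z"
  by (simp add: HC_dom_def)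

lemma gen_eq: "gen k = (\<lambda>p\<in>SS. act (k,False) p)"
  unfolding GM_gen_def by (intro restrict_ext) (auto simp: act_def RT_def split: prod.splits)

lemma act_in: "p \<in> SS \<Longrightarrow> act (k,e) p \<in> SS"
proof (cases p)
  case (Pair w z)
  assume "p \<in> SS"
  then have w: "Im w > 0" and z: "supp_vec n z" using Pair by (auto simp: HC_mem)
  show ?thesis
  proof (cases "k = 0")
    case True then show ?thesis using Pair w alpha_pos by (simp add: act0 HC_mem RT_supp)
  next
    case False
    then show ?thesis using Pair w z
      by (cases e) (auto simp: actT actF HC_mem supp_vec_def)
  qed
qed

lemma act_inv: "k \<noteq> 0 \<Longrightarrow> act (k,False) (act (k,True) p) = p"
  by (cases p) (simp add: actT actF)

lemma act_inv': "k \<noteq> 0 \<Longrightarrow> act (k,True) (act (k,False) p) = p"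
  by (cases p) (simp add: actT actF)

lemma RTinv_RT: "supp_vec n z \<Longrightarrow> RTinv (RT z) = z"
  using RTinv[OF RT_supp[of z]] RT_inj by blast

lemma act_bij: "bij_betw (act (k,False)) SS SS"
proof (cases "k = 0")
  case True
  define f' where "f' = (\<lambda>p. case p of (w,z) \<Rightarrow> (w / complex_of_real \<alpha>, RTinv z))"
  have an: "complex_of_real \<alpha> \<noteq> 0" using alpha_pos by simp
  show ?thesis
  proof (rule bij_betw_byWitness[where f'=f'])
    show "\<forall>p\<in>SS. f' (act (k,False) p) = p"
    proof
      fix p assume p: "p \<in> SS"
      obtain w z where pz: "p = (w,z)" by (cases p)
      then have "supp_vec n z" using p by (simp add: HC_mem)
      then show "f' (act (k,False) p) = p" using pz True an by (simp add: act0 f'_def RTinv_RT)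
    qed
    show "\<forall>p\<in>SS. act (k,False) (f' p) = p"
    proof
      fix p assume p: "p \<in> SS"
      obtain w z where pz: "p = (w,z)" by (cases p)
      then have "supp_vec n z" using p by (simp add: HC_mem)
      then show "act (k,False) (f' p) = p" using pz True an RTinv by (simp add: act0 f'_def)
    qed
    show "act (k,False) ` SS \<subseteq> SS" using act_in by blast
    show "f' ` SS \<subseteq> SS"
    proof
      fix q assume "q \<in> f' ` SS"
      then obtain p where p: "p \<in> SS" "q = f' p" by blast
      obtain w z where pz: "p = (w,z)" by (cases p)
      then have "Im w > 0" "supp_vec n z" using p by (auto simp: HC_mem)
      then show "q \<in> SS" using p pz alpha_pos RTinv by (simp add: f'_def HC_mem)
    qed
  qed
next
  case False
  show ?thesis
  proof (rule bij_betw_byWitness[where f'="act (k,True)"])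
    show "\<forall>p\<in>SS. act (k,True) (act (k,False) p) = p" using act_inv'[OF False] by blast
    show "\<forall>p\<in>SS. act (k,False) (act (k,True) p) = p" using act_inv[OF False] by blast
    show "act (k,False) ` SS \<subseteq> SS" using act_in by blast
    show "act (k,True) ` SS \<subseteq> SS" using act_in by blast
  qed
qed

lemma gen_Bij: "gen k \<in> Bij SS"
proof -
  have "bij_betw (gen k) SS SS"
    by (subst bij_betw_cong[where g="act (k,False)"]) (auto simp: gen_eq act_bij)
  moreover have "gen k \<in> extensional SS" by (simp add: gen_eq)
  ultimately show ?thesis by (simp add: Bij_def)
qed

lemma carrier_BG: "carrier BG = Bij SS" by (simp add: BijGroup_def)

lemma gens_sub: "gen ` {0..2*n+1} \<subseteq> carrier BG"
  using gen_Bij by (auto simp: carrier_BG)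

lemma HH_sub: "subgroup HH BG"
  by (rule group.generate_is_subgroup[OF group_BijGroup gens_sub])

lemma GG_def': "GG = BG\<lparr>carrier := HH\<rparr>" by (simp add: GM_group_def)

lemma GG_group: "group GG"
  unfolding GG_def' by (rule subgroup.subgroup_is_group[OF HH_sub group_BijGroup])

lemma carrier_GG: "carrier GG = HH" by (simp add: GM_group_def)
lemma mult_GG: "x \<otimes>\<^bsub>GG\<^esub> y = x \<otimes>\<^bsub>BG\<^esub> y" by (simp add: GM_group_def)
lemma one_GG: "\<one>\<^bsub>GG\<^esub> = \<one>\<^bsub>BG\<^esub>" by (simp add: GM_group_def)
lemma inv_GG: "x \<in> HH \<Longrightarrow> inv\<^bsub>GG\<^esub> x = inv\<^bsub>BG\<^esub> x"
  unfolding GG_def' by (rule group.m_inv_consistent[OF group_BijGroup HH_sub])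

lemma carrier_Bij: "x \<in> carrier GG \<Longrightarrow> x \<in> Bij SS"
  using group.generate_incl[OF group_BijGroup gens_sub] by (auto simp: carrier_GG carrier_BG)

lemma gen_carrier: "gen k \<in> carrier GG"
proof (cases "k \<le> 2*n+1")
  case True then show ?thesis by (auto simp: carrier_GG intro: generate.incl)
next
  case False
  then have ak: "a k = 0" using a_supp by (simp add: supp_vec_def)
  have bk: "\<forall>j\<in>{1..n}. b j k = 0" using supp_b False by (simp add: supp_vec_def)
  have "gen k = (\<lambda>p\<in>SS. p)"
    unfolding gen_eq
  proof (rule restrict_ext)
    fix p assume "p \<in> SS"
    obtain w z where "p = (w,z)" by (cases p)
    moreover have "k \<noteq> 0" using False by simp
    ultimately show "act (k,False) p = p" using ak bk by (auto simp: actF fun_eq_iff)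
  qed
  also have "\<dots> = \<one>\<^bsub>BG\<^esub>" by (simp add: BijGroup_def)
  finally show ?thesis by (simp add: carrier_GG generate.one)
qed

lemma mult_pt: "x \<in> carrier GG \<Longrightarrow> y \<in> carrier GG \<Longrightarrow> p \<in> SS \<Longrightarrow> (x \<otimes>\<^bsub>GG\<^esub> y) p = x (y p)"
  using carrier_Bij[of x] carrier_Bij[of y] by (simp add: mult_GG BijGroup_def compose_def)

lemma one_pt: "p \<in> SS \<Longrightarrow> \<one>\<^bsub>GG\<^esub> p = p"
  by (simp add: one_GG BijGroup_def)

lemma inv_pt: assumes k: "k \<noteq> 0" and p: "p \<in> SS" shows "(inv\<^bsub>GG\<^esub> (gen k)) p = act (k,True) p"
proof -
  have "inv\<^bsub>GG\<^esub> (gen k) = inv\<^bsub>BG\<^esub> (gen k)" using gen_carrier by (simp add: inv_GG carrier_GG)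
  also have "\<dots> = (\<lambda>x\<in>SS. inv_into SS (gen k) x)" by (rule inv_BijGroup[OF gen_Bij])
  finally have e: "(inv\<^bsub>GG\<^esub> (gen k)) p = inv_into SS (gen k) p" using p by simp
  have inj: "inj_on (gen k) SS" using gen_Bij by (simp add: Bij_def bij_betw_def)
  have q: "act (k,True) p \<in> SS" using act_in p by blast
  have "gen k (act (k,True) p) = p" using q act_inv[OF k] by (simp add: gen_eq)
  then have "inv_into SS (gen k) p = act (k,True) p" by (rule inv_into_f_eq[OF inj q])
  then show ?thesis using e by simp
qed

lemma we_Nil: "word_eval GG gen [] = \<one>\<^bsub>GG\<^esub>" by (simp add: word_eval_def)

lemma we_Cons: "word_eval GG gen ((i,e) # w) = (if e then inv\<^bsub>GG\<^esub> (gen i) else gen i) \<otimes>\<^bsub>GG\<^esub> word_eval GG gen w"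
  by (simp add: word_eval_def)

lemma letter_carrier: "(if e then inv\<^bsub>GG\<^esub> (gen i) else gen i) \<in> carrier GG"
  using gen_carrier group.inv_closed[OF GG_group] by auto

lemma we_carrier: "word_eval GG gen w \<in> carrier GG"
proof (induction w)
  case Nil then show ?case by (simp add: we_Nil group.is_monoid[OF GG_group])
next
  case (Cons l w)
  obtain i e where l: "l = (i,e)" by (cases l)
  show ?case using Cons letter_carrier l by (simp add: we_Cons group.is_monoid[OF GG_group] monoid.m_closed)
qed

lemma we_append: "word_eval GG gen (u @ v) = word_eval GG gen u \<otimes>\<^bsub>GG\<^esub> word_eval GG gen v"
proof (induction u)
  case Nil then show ?case by (simp add: we_Nil we_carrier group.is_monoid[OF GG_group] monoid.l_one)
next
  case (Cons l u)
  obtain i e where l: "l = (i,e)" by (cases l)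
  show ?case using Cons l letter_carrier we_carrier
    by (simp add: we_Cons monoid.m_assoc[OF group.is_monoid[OF GG_group]])
qed

lemma we_pt: "(\<forall>l\<in>set w. fst l = 0 \<longrightarrow> \<not> snd l) \<Longrightarrow> p \<in> SS \<Longrightarrow> word_eval GG gen w p = foldr act w p"
proof (induction w)
  case Nil then show ?case by (simp add: we_Nil one_pt)
next
  case (Cons l w)
  obtain i e where l: "l = (i,e)" by (cases l)
  have q: "word_eval GG gen w p \<in> SS"
    using carrier_Bij[OF we_carrier] Cons.prems(2) Bij_imp_funcset by blast
  have "word_eval GG gen (l # w) p = (if e then inv\<^bsub>GG\<^esub> (gen i) else gen i) (word_eval GG gen w p)"
    using l letter_carrier we_carrier Cons.prems(2) by (simp add: we_Cons mult_pt)
  also have "\<dots> = act (i,e) (word_eval GG gen w p)"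
  proof (cases e)
    case True
    then have "i \<noteq> 0" using Cons.prems(1) l by auto
    then show ?thesis using True inv_pt q by simp
  next
    case False
    have "gen i (word_eval GG gen w p) = act (i, False) (word_eval GG gen w p)" using q by (simp add: gen_eq)
    then show ?thesis using False by simp
  qed
  also have "\<dots> = act l (foldr act w p)" using Cons l by simp
  finally show ?case by simp
qed

lemma elem_eq: "x \<in> carrier GG \<Longrightarrow> y \<in> carrier GG \<Longrightarrow> (\<And>p. p \<in> SS \<Longrightarrow> x p = y p) \<Longrightarrow> x = y"
  by (rule extensionalityI[of _ SS]) (use carrier_Bij Bij_imp_extensional in blast)+


lemma foldr_rep: "j \<noteq> 0 \<Longrightarrow> foldr act (replicate k (j,e)) (w,z) =
   (w + of_int (sgn1 e * int k) * complex_of_real (a j),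
    \<lambda>l. z l + (if l \<in> {1..n} then of_int (sgn1 e * int k) * b l j else 0))"
  by (induction k) (auto simp: sgn1_def actT actF algebra_simps fun_eq_iff)

lemma foldr_gp: "j \<noteq> 0 \<Longrightarrow> foldr act (gen_power j m) (w,z) =
   (w + of_int m * complex_of_real (a j), \<lambda>l. z l + (if l \<in> {1..n} then of_int m * b l j else 0))"
proof -
  assume j: "j \<noteq> 0"
  have h: "sgn1 (m < 0) * int (nat \<bar>m\<bar>) = m" by (simp add: sgn1_def)
  show ?thesis unfolding gen_power_def foldr_rep[OF j] h by (rule HOL.refl)
qed

lemma foldr_concat: "0 \<notin> set js \<Longrightarrow> foldr act (concat (map (\<lambda>j. gen_power j (c j)) js)) (w,z) =
   (w + (\<Sum>j\<leftarrow>js. of_int (c j) * complex_of_real (a j)),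
    \<lambda>l. z l + (if l \<in> {1..n} then (\<Sum>j\<leftarrow>js. of_int (c j) * b l j) else 0))"
proof (induction js)
  case Nil then show ?case by (simp add: fun_eq_iff)
next
  case (Cons j js)
  then have j: "j \<noteq> 0" by auto
  show ?case using Cons by (simp add: foldr_gp[OF j] algebra_simps fun_eq_iff)
qed

lemma sl_sum: "sum_list (map f [1..<N+1]) = sum f {1..N}"
proof -
  have "sum_list (map f [1..<N+1]) = sum f (set [1..<N+1])" by (rule sum_list_distinct_conv_sum_set) simp
  also have "set [1..<N+1] = {1..N}" by auto
  finally show ?thesis .
qed

lemma foldr_T: "foldr act (W.T c) (w,z) =
   (w + (\<Sum>k=1..NN. of_int (c k) * complex_of_real (a k)),
    \<lambda>l. z l + (if l \<in> {1..n} then (\<Sum>k=1..NN. of_int (c k) * b l k) else 0))"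
proof -
  have "0 \<notin> set [1..<NN+1]" by simp
  from foldr_concat[OF this, of c w z] show ?thesis unfolding W.T_def sl_sum .
qed

lemma T_letters: "\<forall>l\<in>set (W.T c). fst l = 0 \<longrightarrow> \<not> snd l"
  using W.T_fst[of c] by auto

lemma rel_holds: assumes lr: "(l, r) \<in> GM_relations NN M" shows "word_eval GG gen l = word_eval GG gen r"
proof -
  consider (comm) i j where "i \<in> {1..NN}" "j \<in> {1..NN}" "l = [(i,False),(j,False)]" "r = [(j,False),(i,False)]"
    | (conj) i where "i \<in> {1..NN}" "l = [(0,False),(i,False),(0,True)]" "r = W.T (\<lambda>j. M i j)"
    using lr unfolding GM_relations_def W.T_def by blast
  then show ?thesis
  proof cases
    case comm
    then have i: "i \<noteq> 0" and j: "j \<noteq> 0" by auto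
    show ?thesis
    proof (rule elem_eq[OF we_carrier we_carrier])
      fix p assume p: "p \<in> SS"
      obtain w z where pz: "p = (w,z)" by (cases p)
      have "word_eval GG gen l p = foldr act l p" using comm p by (intro we_pt) auto
      also have "\<dots> = foldr act r p" using comm pz i j by (simp add: actF algebra_simps fun_eq_iff)
      also have "\<dots> = word_eval GG gen r p" using comm p by (intro we_pt[symmetric]) auto
      finally show "word_eval GG gen l p = word_eval GG gen r p" .
    qed
  next
    case conj
    then have i0: "i \<noteq> 0" by auto
    have A: "word_eval GG gen [(0,False),(i,False)] = word_eval GG gen (r @ [(0,False)])"
    proof (rule elem_eq[OF we_carrier we_carrier])
      fix p assume p: "p \<in> SS"
      obtain w z where pz: "p = (w,z)" by (cases p)
      have aeq: "complex_of_real \<alpha> * complex_of_real (a i) = (\<Sum>k=1..NN. of_int (M i k) * complex_of_real (a k))"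
      proof -
        have "matvec NN (\<lambda>i j. real_of_int (M i j)) a i = \<alpha> * a i" using a_eig by metis
        then have "(\<Sum>k=1..NN. real_of_int (M i k) * a k) = \<alpha> * a i" using conj(1) by (simp add: matvec_def)
        then have "complex_of_real (\<Sum>k=1..NN. real_of_int (M i k) * a k) = complex_of_real (\<alpha> * a i)" by simp
        then show ?thesis by simp
      qed
      have beq: "RT (\<lambda>j. if j \<in> {1..n} then b j i else 0) l = (if l \<in> {1..n} then (\<Sum>k=1..NN. of_int (M i k) * b l k) else 0)" for l
      proof (cases "l \<in> {1..n}")
        case True
        have "matvec NN AA (b l) = (\<lambda>i. \<Sum>m=1..n. R m l * b m i)" using R_def True by blast
        then have "matvec NN AA (b l) i = (\<Sum>m=1..n. R m l * b m i)" by simp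
        then have "(\<Sum>m=1..n. R m l * b m i) = (\<Sum>k=1..NN. of_int (M i k) * b l k)"
          using conj(1) by (simp add: matvec_def cmat_def)
        then show ?thesis using True by (simp add: RT_def)
      next
        case False then show ?thesis by (auto simp: RT_def)
      qed
      have L: "act (0,False) (act (i,False) p) = (complex_of_real \<alpha> * w + complex_of_real \<alpha> * complex_of_real (a i),
          \<lambda>l. RT z l + RT (\<lambda>j. if j \<in> {1..n} then b j i else 0) l)"
        unfolding pz actF[OF i0] act0 RT_add distrib_left by (rule HOL.refl)
      have Rr: "foldr act r (act (0,False) p) = (complex_of_real \<alpha> * w + (\<Sum>k=1..NN. of_int (M i k) * complex_of_real (a k)),
          \<lambda>l. RT z l + (if l \<in> {1..n} then (\<Sum>k=1..NN. of_int (M i k) * b l k) else 0))"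
        unfolding pz act0 conj(3) foldr_T by (rule HOL.refl)
      have "word_eval GG gen [(0,False),(i,False)] p = act (0,False) (act (i,False) p)"
        using p by (subst we_pt) auto
      also have "\<dots> = foldr act r (act (0,False) p)" unfolding L Rr aeq beq by (rule HOL.refl)
      also have "\<dots> = foldr act (r @ [(0,False)]) p" by simp
      also have "\<dots> = word_eval GG gen (r @ [(0,False)]) p"
        using p conj(3) T_letters by (subst we_pt) auto
      finally show "word_eval GG gen [(0,False),(i,False)] p = word_eval GG gen (r @ [(0,False)]) p" .
    qed
    interpret Gg: group GG by (rule GG_group)
    define g0 where "g0 = gen 0"
    define gi where "gi = gen i"
    define t where "t = word_eval GG gen r"
    have g0c: "g0 \<in> carrier GG" and gic: "gi \<in> carrier GG" and tc: "t \<in> carrier GG"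
      using gen_carrier we_carrier by (auto simp: g0_def gi_def t_def)
    have A': "g0 \<otimes>\<^bsub>GG\<^esub> gi = t \<otimes>\<^bsub>GG\<^esub> g0"
      using A g0c gic tc by (simp add: we_Cons we_Nil we_append g0_def gi_def t_def)
    have "word_eval GG gen l = g0 \<otimes>\<^bsub>GG\<^esub> (gi \<otimes>\<^bsub>GG\<^esub> inv\<^bsub>GG\<^esub> g0)"
      using conj(2) g0c gic by (simp add: we_Cons we_Nil g0_def gi_def)
    also have "\<dots> = (g0 \<otimes>\<^bsub>GG\<^esub> gi) \<otimes>\<^bsub>GG\<^esub> inv\<^bsub>GG\<^esub> g0" using g0c gic by (simp add: Gg.m_assoc)
    also have "\<dots> = t" using A' g0c tc by (simp add: Gg.m_assoc)
    finally show ?thesis by (simp add: t_def)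
  qed
qed

lemma eval_WE: "word_equiv (GM_relations NN M) u v \<Longrightarrow> word_eval GG gen u = word_eval GG gen v"
proof (induction rule: word_equiv.induct)
  case (cancel u i e v)
  interpret Gg: group GG by (rule GG_group)
  have c: "word_eval GG gen [(i,e),(i,\<not>e)] = \<one>\<^bsub>GG\<^esub>"
    using gen_carrier by (cases e) (simp_all add: we_Cons we_Nil)
  have c2: "word_eval GG gen ([(i,e),(i,\<not>e)] @ v) = word_eval GG gen v"
    using we_append[of "[(i,e),(i,\<not>e)]" v] c we_carrier by simp
  show ?case using c2 by (simp add: we_append)
next
  case (rel l r u v)
  then show ?case using rel_holds by (simp add: we_append)
qed auto

lemma pow_inj: "\<alpha> ^ q = \<alpha> ^ q' \<Longrightarrow> q = q'"
proof (rule ccontr)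
  assume e: "\<alpha> ^ q = \<alpha> ^ q'" and ne: "q \<noteq> q'"
  show False
  proof (cases "\<alpha> > 1")
    case True
    then show False using e ne by (metis linorder_neqE_nat power_strict_increasing_iff less_irrefl)
  next
    case False
    then have "\<alpha> < 1" using alpha_ne1 by simp
    then show False using e ne alpha_pos by (metis linorder_neqE_nat power_strict_decreasing_iff less_irrefl)
  qed
qed

lemma foldr_rep0: "(act (0,False) ^^ q) (w, \<lambda>_. 0) = (complex_of_real \<alpha> ^ q * w, \<lambda>_. 0)"
  by (induction q) (simp_all add: act0 RT_zero)

lemma NF_key: assumes e: "word_eval GG gen (W.NF p c q) = word_eval GG gen (W.NF p c' q')"
  shows "W.NF p c q = W.NF p c' q'"
proof -
  interpret Gg: group GG by (rule GG_group)
  define X where "X = W.T c @ replicate q (0,False)"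
  define X' where "X' = W.T c' @ replicate q' (0,False)"
  have n1: "word_eval GG gen (W.NF p c q) = word_eval GG gen (replicate p (0,True)) \<otimes>\<^bsub>GG\<^esub> word_eval GG gen X"
    unfolding W.NF_def X_def by (rule we_append)
  have n2: "word_eval GG gen (W.NF p c' q') = word_eval GG gen (replicate p (0,True)) \<otimes>\<^bsub>GG\<^esub> word_eval GG gen X'"
    unfolding W.NF_def X'_def by (rule we_append)
  have "word_eval GG gen (replicate p (0,True)) \<otimes>\<^bsub>GG\<^esub> word_eval GG gen X =
        word_eval GG gen (replicate p (0,True)) \<otimes>\<^bsub>GG\<^esub> word_eval GG gen X'"
    using e n1 n2 by simp
  then have eX: "word_eval GG gen X = word_eval GG gen X'" using we_carrier by simp
  define p0 where "p0 = (\<i>, (\<lambda>_. 0) :: nat \<Rightarrow> complex)"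
  have p0: "p0 \<in> SS" by (simp add: p0_def HC_mem supp_vec_def)
  have fX: "\<forall>l\<in>set X. fst l = 0 \<longrightarrow> \<not> snd l" using T_letters by (auto simp: X_def)
  have fX': "\<forall>l\<in>set X'. fst l = 0 \<longrightarrow> \<not> snd l" using T_letters by (auto simp: X'_def)
  have val: "foldr act (W.T d @ replicate r (0,False)) p0 = (complex_of_real \<alpha> ^ r * \<i> + (\<Sum>k=1..NN. of_int (d k) * complex_of_real (a k)),
      \<lambda>l. 0 + (if l \<in> {1..n} then (\<Sum>k=1..NN. of_int (d k) * b l k) else 0))" for d r
    unfolding p0_def foldr_append foldr_replicate foldr_rep0 foldr_T by (rule HOL.refl)
  have "foldr act X p0 = foldr act X' p0" using eX we_pt[OF fX p0] we_pt[OF fX' p0] by simp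
  then have E: "(complex_of_real \<alpha> ^ q * \<i> + (\<Sum>k=1..NN. of_int (c k) * complex_of_real (a k)),
      \<lambda>l. 0 + (if l \<in> {1..n} then (\<Sum>k=1..NN. of_int (c k) * b l k) else 0)) =
     (complex_of_real \<alpha> ^ q' * \<i> + (\<Sum>k=1..NN. of_int (c' k) * complex_of_real (a k)),
      \<lambda>l. 0 + (if l \<in> {1..n} then (\<Sum>k=1..NN. of_int (c' k) * b l k) else 0))"
    by (simp only: X_def X'_def val)
  have F1: "complex_of_real \<alpha> ^ q * \<i> + (\<Sum>k=1..NN. of_int (c k) * complex_of_real (a k)) =
      complex_of_real \<alpha> ^ q' * \<i> + (\<Sum>k=1..NN. of_int (c' k) * complex_of_real (a k))"
    using E by (simp only: prod.inject)
  have F2: "(\<lambda>l. 0 + (if l \<in> {1..n} then (\<Sum>k=1..NN. of_int (c k) * b l k) else 0)) =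
      (\<lambda>l. 0 + (if l \<in> {1..n} then (\<Sum>k=1..NN. of_int (c' k) * b l k) else 0))"
    using E by (simp only: prod.inject)
  have s: "(\<Sum>k=1..NN. of_int (f k) * complex_of_real (a k)) = complex_of_real (\<Sum>k=1..NN. real_of_int (f k) * a k)"
    for f :: "nat \<Rightarrow> int" by simp
  have pw: "complex_of_real \<alpha> ^ k = complex_of_real (\<alpha> ^ k)" for k by simp
  have imf: "Im (complex_of_real r * \<i> + complex_of_real A) = r" for r A by simp
  have ref: "Re (complex_of_real r * \<i> + complex_of_real A) = A" for r A by simp
  have E1: "complex_of_real (\<alpha> ^ q) * \<i> + complex_of_real (\<Sum>k=1..NN. real_of_int (c k) * a k) =
            complex_of_real (\<alpha> ^ q') * \<i> + complex_of_real (\<Sum>k=1..NN. real_of_int (c' k) * a k)"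
    using F1 unfolding s pw .
  have "\<alpha> ^ q = \<alpha> ^ q'" using arg_cong[OF E1, of Im] unfolding imf .
  then have qq: "q = q'" by (rule pow_inj)
  have da: "(\<Sum>k=1..NN. real_of_int (c k) * a k) = (\<Sum>k=1..NN. real_of_int (c' k) * a k)"
    using arg_cong[OF E1, of Re] unfolding ref .
  have db: "\<forall>l\<in>{1..n}. (\<Sum>k=1..NN. of_int (c k) * b l k) = (\<Sum>k=1..NN. of_int (c' k) * b l k)"
  proof
    fix l assume l: "l \<in> {1..n}"
    from fun_cong[OF F2, of l] show "(\<Sum>k=1..NN. of_int (c k) * b l k) = (\<Sum>k=1..NN. of_int (c' k) * b l k)"
      using l by simp
  qed
  define d where "d k = real_of_int (c k - c' k)" for k
  have "\<forall>k\<in>{1..NN}. d k = 0"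
  proof (rule trans_indep)
    show "(\<Sum>k=1..NN. d k * a k) = 0" using da by (simp add: d_def left_diff_distrib sum_subtractf)
    show "\<forall>j\<in>{1..n}. (\<Sum>k=1..NN. complex_of_real (d k) * b j k) = 0"
      using db by (simp add: d_def left_diff_distrib sum_subtractf)
  qed
  then have "\<forall>k\<in>{1..NN}. c k = c' k" by (simp add: d_def)
  then have "W.T c = W.T c'" by (intro W.T_cong) auto
  then show ?thesis using qq unfolding W.NF_def by simp
qed

lemma faithful_aux:
  assumes pp: "p \<le> p'" and u: "word_equiv (GM_relations NN M) u (W.NF p c q)"
    and v: "word_equiv (GM_relations NN M) v (W.NF p' c' q')"
    and e: "word_eval GG gen u = word_eval GG gen v"
  shows "word_equiv (GM_relations NN M) u v"
proof -
  define d where "d = p' - p"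
  have pd: "p + d = p'" using pp by (simp add: d_def)
  have sh: "word_equiv (GM_relations NN M) (W.NF p c q) (W.NF p' ((W.MT ^^ d) c) (d + q))"
    using W.shift[of p c q d] pd by simp
  have "word_eval GG gen (W.NF p' ((W.MT ^^ d) c) (d + q)) = word_eval GG gen (W.NF p' c' q')"
    using eval_WE[OF u] eval_WE[OF v] eval_WE[OF sh] e by simp
  then have "W.NF p' ((W.MT ^^ d) c) (d + q) = W.NF p' c' q'" by (rule NF_key)
  then have "word_equiv (GM_relations NN M) u (W.NF p' c' q')" using W.WE_trans[OF u sh] by simp
  then show ?thesis by (rule W.WE_trans[OF _ W.WE_sym[OF v]])
qed

lemma faithful:
  assumes "set (map fst u) \<subseteq> {0..NN}" "set (map fst v) \<subseteq> {0..NN}"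
    and e: "word_eval GG gen u = word_eval GG gen v"
  shows "word_equiv (GM_relations NN M) u v"
proof -
  obtain p c q where u: "word_equiv (GM_relations NN M) u (W.NF p c q)" using W.norm assms(1) by blast
  obtain p' c' q' where v: "word_equiv (GM_relations NN M) v (W.NF p' c' q')" using W.norm assms(2) by blast
  show ?thesis
  proof (cases "p \<le> p'")
    case True show ?thesis by (rule faithful_aux[OF True u v e])
  next
    case False
    then have "p' \<le> p" by simp
    from faithful_aux[OF this v u e[symmetric]] show ?thesis by (rule W.WE_sym)
  qed
qed

theorem main: "has_presentation GG {0..2*n+1} gen (GM_relations (2*n+1) M)"
  unfolding has_presentation_def
proof (intro conjI allI impI)
  show "gen ` {0..2*n+1} \<subseteq> carrier GG" using gen_carrier by blast
  have "generate GG (gen ` {0..2*n+1}) = generate BG (gen ` {0..2*n+1})"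
    unfolding GG_def' by (rule group.generate_consistent[OF group_BijGroup _ HH_sub]) (auto intro: generate.incl)
  then show "generate GG (gen ` {0..2*n+1}) = carrier GG" by (simp add: carrier_GG)
  show "\<forall>(l, r)\<in>GM_relations (2*n+1) M. word_eval GG gen l = word_eval GG gen r"
    using rel_holds by blast
  fix u v :: "nat word"
  assume "set (map fst u) \<subseteq> {0..2*n+1}" "set (map fst v) \<subseteq> {0..2*n+1}"
    "word_eval GG gen u = word_eval GG gen v"
  then show "word_equiv (GM_relations (2*n+1) M) u v" by (rule faithful)
qed

end

theorem corollary2p5:
  fixes n :: nat and M :: "nat \<Rightarrow> nat \<Rightarrow> int" and \<alpha> :: real
    and a :: "nat \<Rightarrow> real" and b :: "nat \<Rightarrow> nat \<Rightarrow> complex" and R :: "nat \<Rightarrow> nat \<Rightarrow> complex"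
  assumes n: "n \<ge> 1"
    and detM: "mdet (2*n+1) M = 1"
    and real_eig: "{l. is_eigenvalue (2*n+1) (cmat M) l \<and> Im l = 0} = {complex_of_real \<alpha>}"
    and alpha_pos: "\<alpha> > 0" and alpha_ne1: "\<alpha> \<noteq> 1"
    and simple: "Polynomial.order (complex_of_real \<alpha>) (char_poly_fn (2*n+1) (cmat M)) = 1"
    and a_eig: "supp_vec (2*n+1) a" "a \<noteq> (\<lambda>_. 0)"
      "matvec (2*n+1) (\<lambda>i j. real_of_int (M i j)) a = (\<lambda>i. \<alpha> * a i)"
    and b_basis: "is_basis_of n b (upper_gen_space (2*n+1) (cmat M))"
    and R_def: "\<forall>j\<in>{1..n}. matvec (2*n+1) (cmat M) (b j) = (\<lambda>i. \<Sum>l=1..n. R l j * b l i)"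
  shows "has_presentation (GM_group n \<alpha> a b R) {0..2*n+1} (GM_gen n \<alpha> a b R)
           (GM_relations (2*n+1) M)"
proof -
  interpret GMset n M \<alpha> a b R
    apply unfold_locales
    using n real_eig alpha_pos alpha_ne1 a_eig b_basis R_def by auto
  show ?thesis by (rule main)
qed

end
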